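(* Let $k\ge 2$ and $n\ge k+1$ be integers. The minimum of ${\rm cc}(G)$ over all $k$-connected graphs $G$ of order $n$ equals $\min\{n,3k\}$. That is, every $k$-connected graph $G$ of order $n$ satisfies ${\rm cc}(G)\ge \min\{n,3k\}$, and some $k$-connected graph of order $n$ attains equality.
   Context: All graphs are finite and simple. A cummerbund of a graph is a longest cycle in it. The cummerbund covering number ${\rm cc}(G)$ is the number of vertices of $G$ that lie in at least one cummerbund. *)

theory Defs
  imports Main
begin

definition sgraph :: "'a set \<Rightarrow> ('a \<Rightarrow> 'a \<Rightarrow> bool) \<Rightarrow> bool" where
  "sgraph V E \<longleftrightarrow> finite V \<and> (\<forall>u v. E u v \<longrightarrow> u \<in> V \<and> v \<in> V \<and> u \<noteq> v \<and> E v u)"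

definition connected_on :: "('a \<Rightarrow> 'a \<Rightarrow> bool) \<Rightarrow> 'a set \<Rightarrow> bool" where
  "connected_on E S \<longleftrightarrow> S \<noteq> {} \<and>
     (\<forall>u\<in>S. \<forall>v\<in>S. \<exists>xs. xs \<noteq> [] \<and> hd xs = u \<and> last xs = v \<and> set xs \<subseteq> S \<and>
        (\<forall>i. i + 1 < length xs \<longrightarrow> E (xs ! i) (xs ! (i + 1))))"

definition k_connected :: "'a set \<Rightarrow> ('a \<Rightarrow> 'a \<Rightarrow> bool) \<Rightarrow> nat \<Rightarrow> bool" where
  "k_connected V E k \<longleftrightarrow> card V > k \<and>
     (\<forall>S. S \<subseteq> V \<and> card S < k \<longrightarrow> connected_on E (V - S))"

definition is_cycle :: "'a set \<Rightarrow> ('a \<Rightarrow> 'a \<Rightarrow> bool) \<Rightarrow> 'a list \<Rightarrow> bool" where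
  "is_cycle V E cs \<longleftrightarrow> length cs \<ge> 3 \<and> distinct cs \<and> set cs \<subseteq> V \<and>
     (\<forall>i < length cs. E (cs ! i) (cs ! ((i + 1) mod length cs)))"

definition is_cummerbund :: "'a set \<Rightarrow> ('a \<Rightarrow> 'a \<Rightarrow> bool) \<Rightarrow> 'a list \<Rightarrow> bool" where
  "is_cummerbund V E cs \<longleftrightarrow> is_cycle V E cs \<and>
     (\<forall>ds. is_cycle V E ds \<longrightarrow> length ds \<le> length cs)"

definition cc :: "'a set \<Rightarrow> ('a \<Rightarrow> 'a \<Rightarrow> bool) \<Rightarrow> nat" where
  "cc V E = card (\<Union>{set cs | cs. is_cummerbund V E cs})"

end

theory Submission
  imports Defs
begin

definition lwalk :: "('a \<Rightarrow> 'a \<Rightarrow> bool) \<Rightarrow> 'a list \<Rightarrow> bool" where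
  "lwalk E p \<longleftrightarrow> p \<noteq> [] \<and> successively (\<lambda>u w. u = w \<or> E u w) p"

definition reach :: "('a \<Rightarrow> 'a \<Rightarrow> bool) \<Rightarrow> 'a set \<Rightarrow> 'a set \<Rightarrow> 'a set" where
  "reach E S A = {z. \<exists>p. lwalk E p \<and> hd p \<in> A \<and> last p = z \<and> set p \<inter> S = {}}"

lemma lwalk_single[simp]: "lwalk E [a]"
  by (simp add: lwalk_def)

lemma lwalk_append:
  "lwalk E p \<Longrightarrow> lwalk E q \<Longrightarrow> (last p = hd q \<or> E (last p) (hd q)) \<Longrightarrow> lwalk E (p @ q)"
  by (auto simp: lwalk_def successively_append_iff)

lemma lwalk_appendD1: "lwalk E (p @ q) \<Longrightarrow> p \<noteq> [] \<Longrightarrow> lwalk E p"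
  by (auto simp: lwalk_def successively_append_iff)

lemma lwalk_appendD2: "lwalk E (p @ q) \<Longrightarrow> q \<noteq> [] \<Longrightarrow> lwalk E q"
  by (auto simp: lwalk_def successively_append_iff)

lemma lwalk_take: "lwalk E p \<Longrightarrow> i < length p \<Longrightarrow> lwalk E (take (Suc i) p)"
  unfolding lwalk_def successively_conv_nth by auto

lemma lwalk_drop: "lwalk E p \<Longrightarrow> i < length p \<Longrightarrow> lwalk E (drop i p)"
  unfolding lwalk_def successively_conv_nth by auto

lemma lwalk_mono: "lwalk E p \<Longrightarrow> (\<And>u w. E u w \<Longrightarrow> E' u w) \<Longrightarrow> lwalk E' p"
  unfolding lwalk_def using successively_mono by (metis (mono_tags, lifting))

lemma lwalk_rev: "lwalk E p \<Longrightarrow> (\<And>u w. E u w \<Longrightarrow> E w u) \<Longrightarrow> lwalk E (rev p)"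
  unfolding lwalk_def by (auto intro: successively_mono)

lemma reach_base: "a \<in> A \<Longrightarrow> a \<notin> S \<Longrightarrow> a \<in> reach E S A"
  unfolding reach_def by (rule CollectI, rule exI[of _ "[a]"]) auto

lemma reach_step: assumes "z \<in> reach E S A" "E z w" "w \<notin> S" shows "w \<in> reach E S A"
proof -
  obtain p where p: "lwalk E p" "hd p \<in> A" "last p = z" "set p \<inter> S = {}"
    using assms(1) unfolding reach_def by blast
  have "lwalk E (p @ [w])" using p assms by (intro lwalk_append) auto
  moreover have "hd (p @ [w]) \<in> A" using p by (auto simp: lwalk_def)
  ultimately show ?thesis unfolding reach_def using p assms by force
qed

lemma reach_notin: "z \<in> reach E S A \<Longrightarrow> z \<notin> S"
  unfolding reach_def lwalk_def using last_in_set by fastforce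

lemma reach_closed:
  assumes base: "A - S \<subseteq> Q" and step: "\<And>z w. z \<in> Q \<Longrightarrow> E z w \<Longrightarrow> w \<notin> S \<Longrightarrow> w \<in> Q"
  shows "reach E S A \<subseteq> Q"
proof
  fix z assume "z \<in> reach E S A"
  then obtain p where p: "lwalk E p" "hd p \<in> A" "last p = z" "set p \<inter> S = {}"
    unfolding reach_def by blast
  have "lwalk E p \<Longrightarrow> hd p \<in> A \<Longrightarrow> set p \<inter> S = {} \<Longrightarrow> last p \<in> Q" for p
  proof (induction p rule: rev_induct)
    case Nil then show ?case by (simp add: lwalk_def)
  next
    case (snoc w q)
    show ?case
    proof (cases "q = []")
      case True then show ?thesis using snoc base by auto
    next
      case False
      have "lwalk E q" using snoc.prems False lwalk_appendD1 by blast
      moreover have "hd q \<in> A" using snoc.prems False by auto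
      ultimately have "last q \<in> Q" using snoc by auto
      moreover have "last q = w \<or> E (last q) w"
        using snoc.prems(1) False by (auto simp: lwalk_def successively_append_iff)
      ultimately show ?thesis using step snoc.prems by auto
    qed
  qed
  then show "z \<in> Q" using p by blast
qed

lemma reach_walk_last:
  assumes "lwalk E p" "hd p \<in> reach E S A" "set p \<inter> S = {}"
  shows "last p \<in> reach E S A"
proof -
  have "reach E S (reach E S A) \<subseteq> reach E S A"
    by (rule reach_closed) (auto intro: reach_step)
  moreover have "last p \<in> reach E S (reach E S A)"
    using assms unfolding reach_def by blast
  ultimately show ?thesis by blast
qed

lemma reach_walk_set:
  assumes "lwalk E p" "hd p \<in> A" "set p \<inter> S = {}"
  shows "set p \<subseteq> reach E S A"
proof
  fix x assume "x \<in> set p"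
  then obtain i where i: "i < length p" "p ! i = x" by (meson in_set_conv_nth)
  have "lwalk E (take (Suc i) p)" using lwalk_take assms i by blast
  moreover have "hd (take (Suc i) p) \<in> A" using assms i by (cases p) auto
  moreover have "last (take (Suc i) p) = x" using i by (simp add: take_Suc_conv_app_nth)
  moreover have "set (take (Suc i) p) \<inter> S = {}" using assms set_take_subset by fast
  ultimately show "x \<in> reach E S A" unfolding reach_def by blast
qed

lemma reach_mono:
  assumes "\<And>u w. E u w \<Longrightarrow> E' u w" "S' \<subseteq> S" "A \<subseteq> A'"
  shows "reach E S A \<subseteq> reach E' S' A'"
proof
  fix z assume "z \<in> reach E S A"
  then obtain p where p: "lwalk E p" "hd p \<in> A" "last p = z" "set p \<inter> S = {}"
    unfolding reach_def by blast
  have "lwalk E' p" using p(1) assms(1) by (rule lwalk_mono)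
  then show "z \<in> reach E' S' A'" unfolding reach_def using p assms(2,3) by blast
qed

lemma reach_inter:
  assumes sym: "\<And>u w. E u w \<Longrightarrow> E w u" and z: "z \<in> reach E S A" "z \<in> reach E S B"
  shows "reach E S A \<inter> B \<noteq> {}"
proof -
  obtain q where q: "lwalk E q" "hd q \<in> B" "last q = z" "set q \<inter> S = {}"
    using z(2) unfolding reach_def by blast
  have "lwalk E (rev q)" using q sym lwalk_rev by blast
  moreover have "hd (rev q) \<in> reach E S A" using q z
    by (metis hd_rev)
  moreover have "set (rev q) \<inter> S = {}" using q by simp
  ultimately have "last (rev q) \<in> reach E S A" by (rule reach_walk_last)
  moreover have "last (rev q) \<in> B" using q by (simp add: last_rev)
  ultimately show ?thesis by blast
qed

lemma reach_sym:
  assumes sym: "\<And>u w. E u w \<Longrightarrow> E w u"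
  shows "reach E S A \<inter> B = {} \<longleftrightarrow> reach E S B \<inter> A = {}"
proof -
  have *: "reach E S A \<inter> B \<noteq> {}" if ne: "reach E S B \<inter> A \<noteq> {}" for A B
  proof -
    obtain z where z1: "z \<in> reach E S B" "z \<in> A" using ne by blast
    have zA: "z \<in> reach E S A" using reach_base reach_notin z1 by metis
    show ?thesis by (rule reach_inter[of E z S A B, OF sym zA z1(1)])
  qed
  show ?thesis using *[of B A] *[of A B] by blast
qed

lemma side:
  assumes hypE: "\<forall>T. T \<subseteq> V \<longrightarrow> reach E T A \<inter> B = {} \<longrightarrow> k \<le> card T"
    and E': "\<And>u v. E' u v \<longleftrightarrow> E u v \<and> \<not> ((u = a \<and> v = b) \<or> (u = b \<and> v = a))"
    and RAB: "reach E' S A \<inter> B = {}" and a: "a \<in> reach E' S A" and b: "b \<notin> reach E' S A"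
  shows "\<forall>T. T \<subseteq> V \<longrightarrow> reach E' T A \<inter> insert a S = {} \<longrightarrow> k \<le> card T"
proof (intro allI impI)
  fix T assume TV: "T \<subseteq> V" and H: "reach E' T A \<inter> insert a S = {}"
  let ?Q = "reach E' T A"
  have QRA: "?Q \<subseteq> reach E' S A"
  proof -
    have "?Q \<subseteq> ?Q \<inter> reach E' S A"
    proof (rule reach_closed)
      show "A - T \<subseteq> ?Q \<inter> reach E' S A"
      proof
        fix x assume x: "x \<in> A - T"
        then have "x \<in> ?Q" by (auto intro: reach_base)
        then have "x \<notin> S" using H by auto
        then show "x \<in> ?Q \<inter> reach E' S A" using x \<open>x \<in> ?Q\<close> by (auto intro: reach_base)
      qed
    next
      fix z w assume "z \<in> ?Q \<inter> reach E' S A" "E' z w" "w \<notin> T"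
      moreover then have "w \<in> ?Q" by (auto intro: reach_step)
      moreover then have "w \<notin> S" using H by auto
      ultimately show "w \<in> ?Q \<inter> reach E' S A" by (auto intro: reach_step)
    qed
    then show ?thesis by blast
  qed
  have "reach E T A \<subseteq> ?Q"
  proof (rule reach_closed)
    show "A - T \<subseteq> ?Q" by (auto intro: reach_base)
  next
    fix z w assume z: "z \<in> ?Q" "E z w" "w \<notin> T"
    show "w \<in> ?Q"
    proof (cases "E' z w")
      case True then show ?thesis using z by (auto intro: reach_step)
    next
      case False
      then have "(z = a \<and> w = b) \<or> (z = b \<and> w = a)" using E' z by auto
      moreover have "z \<noteq> a" using H z by auto
      moreover have "z \<noteq> b" using QRA b z by auto
      ultimately show ?thesis by auto
    qed
  qed
  then have "reach E T A \<inter> B = {}" using QRA RAB by blast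
  then show "k \<le> card T" using hypE TV by blast
qed

definition trunc :: "'a set \<Rightarrow> 'a list \<Rightarrow> 'a list" where
  "trunc X p = take (Suc (LEAST i. p ! i \<in> X)) p"

lemma trunc_props:
  assumes "p \<noteq> []" "last p \<in> X"
  shows "\<exists>j < length p. trunc X p = take (Suc j) p \<and> p ! j \<in> X \<and> (\<forall>i<j. p ! i \<notin> X)"
proof -
  have ex: "\<exists>i. p ! i \<in> X" using assms by (metis last_conv_nth)
  define j where "j = (LEAST i. p ! i \<in> X)"
  have j1: "p ! j \<in> X" using ex unfolding j_def by (rule LeastI_ex)
  have j2: "\<forall>i<j. p ! i \<notin> X" unfolding j_def using not_less_Least by blast
  have "j \<le> length p - 1" unfolding j_def using assms
    by (metis Least_le last_conv_nth)
  then have "j < length p" using assms by (cases p) auto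
  then show ?thesis using j1 j2 unfolding trunc_def j_def by blast
qed

lemma trunc_basic:
  assumes "p \<noteq> []" "last p \<in> X"
  shows "trunc X p \<noteq> []" "hd (trunc X p) = hd p" "last (trunc X p) \<in> X"
    "set (butlast (trunc X p)) \<inter> X = {}" "set (trunc X p) \<subseteq> set p"
    "\<exists>j < length p. trunc X p = take (Suc j) p"
proof -
  obtain j where j: "j < length p" "trunc X p = take (Suc j) p" "p ! j \<in> X" "\<forall>i<j. p ! i \<notin> X"
    using trunc_props[OF assms] by blast
  show "trunc X p \<noteq> []" using j assms by simp
  show "hd (trunc X p) = hd p" using j assms by (cases p) auto
  show "last (trunc X p) \<in> X" using j by (simp add: take_Suc_conv_app_nth)
  have "butlast (trunc X p) = take j p" using j by (simp add: take_Suc_conv_app_nth)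
  then show "set (butlast (trunc X p)) \<inter> X = {}" using j
    by (auto simp: in_set_conv_nth)
  show "set (trunc X p) \<subseteq> set p" using j by (simp add: set_take_subset)
  show "\<exists>j < length p. trunc X p = take (Suc j) p" using j by blast
qed

lemma trunc_lwalk: assumes "lwalk E p" "last p \<in> X" shows "lwalk E (trunc X p)"
proof -
  have ne: "p \<noteq> []" using assms by (simp add: lwalk_def)
  obtain j where "j < length p" "trunc X p = take (Suc j) p" using trunc_basic(6)[OF ne assms(2)] by blast
  then show ?thesis using lwalk_take assms(1) by simp
qed

lemma trunc_reach:
  assumes "lwalk E p" "hd p \<in> A" "last p \<in> X"
  shows "set (butlast (trunc X p)) \<subseteq> reach E X A"
proof (cases "butlast (trunc X p) = []")
  case True then show ?thesis by simp
next
  case False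
  have ne: "p \<noteq> []" using assms by (simp add: lwalk_def)
  have w: "lwalk E (trunc X p)" using trunc_lwalk assms by blast
  have tne: "trunc X p \<noteq> []" using w by (simp add: lwalk_def)
  have eq: "trunc X p = butlast (trunc X p) @ [last (trunc X p)]" using tne by simp
  have "lwalk E (butlast (trunc X p))"
    using w False eq lwalk_appendD1 by metis
  moreover have "hd (butlast (trunc X p)) \<in> A"
    using False trunc_basic(2)[OF ne assms(3)] assms(2) eq hd_append2 by metis
  moreover have "set (butlast (trunc X p)) \<inter> X = {}" using trunc_basic(4)[OF ne assms(3)] .
  ultimately show ?thesis by (rule reach_walk_set)
qed

definition disj_fam :: "'a list set \<Rightarrow> bool" where
  "disj_fam P \<longleftrightarrow> (\<forall>p\<in>P. \<forall>q\<in>P. p \<noteq> q \<longrightarrow> set p \<inter> set q = {})"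

lemma disj_fam_inj:
  assumes "disj_fam P" "\<forall>p\<in>P. f p \<noteq> [] \<and> set (f p) \<subseteq> set p"
  shows "inj_on f P"
proof (rule inj_onI, rule ccontr)
  fix p q assume pq: "p \<in> P" "q \<in> P" "f p = f q" "p \<noteq> q"
  then have "set p \<inter> set q = {}" using assms(1) unfolding disj_fam_def by blast
  moreover have "hd (f p) \<in> set p" using assms(2) pq(1) hd_in_set by blast
  moreover have "hd (f q) \<in> set q" using assms(2) pq(2) hd_in_set by blast
  then have "hd (f p) \<in> set q" using pq(3) by simp
  ultimately show False by blast
qed

lemma disj_fam_inj_last:
  assumes "disj_fam P" "\<forall>p\<in>P. p \<noteq> []"
  shows "inj_on last P"
proof (rule inj_onI, rule ccontr)
  fix p q assume pq: "p \<in> P" "q \<in> P" "last p = last q" "p \<noteq> q"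
  then have "set p \<inter> set q = {}" using assms(1) unfolding disj_fam_def by blast
  moreover have "last p \<in> set p" using assms(2) pq(1) last_in_set by blast
  moreover have "last q \<in> set q" using assms(2) pq(2) last_in_set by blast
  then have "last p \<in> set q" using pq(3) by simp
  ultimately show False by blast
qed

lemma disj_fam_image:
  assumes "disj_fam P" "\<forall>p\<in>P. set (f p) \<subseteq> set p" "inj_on f P"
  shows "disj_fam (f ` P)"
  unfolding disj_fam_def
proof (intro ballI impI)
  fix x y assume "x \<in> f ` P" "y \<in> f ` P" "x \<noteq> y"
  then obtain p q where "p \<in> P" "q \<in> P" "x = f p" "y = f q" "p \<noteq> q" by blast
  then show "set x \<inter> set y = {}" using assms unfolding disj_fam_def by blast
qed

lemma normalize:
  assumes "finite P" "card P = k" "\<forall>p\<in>P. lwalk E p \<and> hd p \<in> A \<and> last p \<in> X" "disj_fam P"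
  shows "\<exists>P'. finite P' \<and> card P' = k \<and> disj_fam P' \<and>
     (\<forall>p\<in>P'. lwalk E p \<and> hd p \<in> A \<and> last p \<in> X \<and> set (butlast p) \<subseteq> reach E X A)"
proof -
  have ne: "\<forall>p\<in>P. p \<noteq> []" using assms(3) by (auto simp: lwalk_def)
  have sub: "\<forall>p\<in>P. trunc X p \<noteq> [] \<and> set (trunc X p) \<subseteq> set p"
  proof
    fix p assume p: "p \<in> P"
    have "p \<noteq> []" "last p \<in> X" using p ne assms(3) by auto
    then show "trunc X p \<noteq> [] \<and> set (trunc X p) \<subseteq> set p" using trunc_basic(1,5) by blast
  qed
  have inj: "inj_on (trunc X) P" using assms(4) sub by (rule disj_fam_inj)
  show ?thesis
  proof (intro exI conjI)
    show "finite (trunc X ` P)" using assms by simp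
    show "card (trunc X ` P) = k" using card_image[OF inj] assms(2) by simp
    show "disj_fam (trunc X ` P)" using disj_fam_image[OF assms(4) _ inj] sub by blast
    show "\<forall>p\<in>trunc X ` P. lwalk E p \<and> hd p \<in> A \<and> last p \<in> X \<and> set (butlast p) \<subseteq> reach E X A"
    proof
      fix q assume "q \<in> trunc X ` P"
      then obtain p where p: "p \<in> P" "q = trunc X p" by blast
      have pp: "p \<noteq> []" "lwalk E p" "hd p \<in> A" "last p \<in> X" using p ne assms(3) by auto
      have "lwalk E q" using p(2) trunc_lwalk[OF pp(2,4)] by simp
      moreover have "hd q \<in> A" using p(2) trunc_basic(2)[OF pp(1,4)] pp(3) by simp
      moreover have "last q \<in> X" using p(2) trunc_basic(3)[OF pp(1,4)] by simp
      moreover have "set (butlast q) \<subseteq> reach E X A" using p(2) trunc_reach[OF pp(2,3,4)] by simp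
      ultimately show "lwalk E q \<and> hd q \<in> A \<and> last q \<in> X \<and> set (butlast q) \<subseteq> reach E X A"
        by blast
    qed
  qed
qed

lemma set_butlast_last: "p \<noteq> [] \<Longrightarrow> set p = insert (last p) (set (butlast p))"
  by (induction p) auto

lemma combine:
  assumes E'E: "\<And>u v. E' u v \<Longrightarrow> E u v" and Eab: "E a b" and sym: "\<And>u v. E u v \<Longrightarrow> E v u"
    and P': "finite P'" "card P' = k" "disj_fam P'"
      "\<forall>p\<in>P'. lwalk E' p \<and> hd p \<in> A \<and> last p \<in> insert a S \<and> set (butlast p) \<subseteq> reach E' (insert a S) A"
    and Q': "finite Q'" "card Q' = k" "disj_fam Q'"
      "\<forall>q\<in>Q'. lwalk E' q \<and> hd q \<in> B \<and> last q \<in> insert b S \<and> set (butlast q) \<subseteq> reach E' (insert b S) B"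
    and RARB: "reach E' S A \<inter> reach E' S B = {}"
    and ab: "a \<in> reach E' S A" "b \<in> reach E' S B" "a \<noteq> b"
    and cards: "card (insert b S) = k" "finite S"
  shows "\<exists>P. finite P \<and> card P = k \<and> disj_fam P \<and> (\<forall>p\<in>P. lwalk E p \<and> hd p \<in> A \<and> last p \<in> B)"
proof -
  define g where "g s = (if s = a then b else s)" for s
  have aS: "a \<notin> S" "b \<notin> S" using reach_notin[OF ab(1)] reach_notin[OF ab(2)] by auto
  have Pne: "\<forall>p\<in>P'. p \<noteq> []" using P' by (auto simp: lwalk_def)
  have Qne: "\<forall>q\<in>Q'. q \<noteq> []" using Q' by (auto simp: lwalk_def)
  have injP: "inj_on last P'" using disj_fam_inj_last P'(3) Pne by blast
  have injQ: "inj_on last Q'" using disj_fam_inj_last Q'(3) Qne by blast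
  have lastQ: "last ` Q' = insert b S"
  proof (rule card_subset_eq)
    show "finite (insert b S)" using cards by simp
    show "last ` Q' \<subseteq> insert b S" using Q' by auto
    show "card (last ` Q') = card (insert b S)" using card_image[OF injQ] Q'(2) cards(1) by simp
  qed
  have ginj: "g s1 = g s2 \<Longrightarrow> s1 \<in> insert a S \<Longrightarrow> s2 \<in> insert a S \<Longrightarrow> s1 = s2" for s1 s2
    using aS unfolding g_def by (auto split: if_splits)
  have gin: "s \<in> insert a S \<Longrightarrow> g s \<in> insert b S" for s unfolding g_def by auto
  define qf where "qf p = (THE q. q \<in> Q' \<and> last q = g (last p))" for p
  have qf: "qf p \<in> Q' \<and> last (qf p) = g (last p)" if "p \<in> P'" for p
  proof -
    have "\<exists>!q. q \<in> Q' \<and> last q = g (last p)"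
    proof -
      have "g (last p) \<in> last ` Q'" using lastQ gin P'(4) that by auto
      then obtain q where "q \<in> Q'" "last q = g (last p)" by (metis imageE)
      moreover have "q' = q" if "q' \<in> Q'" "last q' = g (last p)" for q'
        using injQ that \<open>q \<in> Q'\<close> \<open>last q = g (last p)\<close> unfolding inj_on_def by auto
      ultimately show ?thesis by blast
    qed
    then show ?thesis unfolding qf_def by (rule theI')
  qed
  have key: "set p \<inter> set q = {}" if p: "p \<in> P'" and q: "q \<in> Q'" and ne: "last q \<noteq> g (last p)" for p q
  proof (rule ccontr)
    assume "set p \<inter> set q \<noteq> {}"
    then obtain x where x: "x \<in> set p" "x \<in> set q" by blast
    have RA': "reach E' (insert a S) A \<subseteq> reach E' S A" by (rule reach_mono) auto
    have RB': "reach E' (insert b S) B \<subseteq> reach E' S B" by (rule reach_mono) auto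
    have xp: "x = last p \<or> x \<in> reach E' (insert a S) A"
      using x(1) P'(4) p Pne set_butlast_last by blast
    have xq: "x = last q \<or> x \<in> reach E' (insert b S) B"
      using x(2) Q'(4) q Qne set_butlast_last by blast
    have lp: "last p \<in> insert a S" using P'(4) p by blast
    have lq: "last q \<in> insert b S" using Q'(4) q by blast
    show False
    proof (cases "x = last p")
      case True
      show False
      proof (cases "x = last q")
        case True
        then have "x \<in> S" using lp lq \<open>x = last p\<close> aS ab(3) by auto
        then show False using ne True \<open>x = last p\<close> aS unfolding g_def by (auto split: if_splits)
      next
        case False
        then have xr: "x \<in> reach E' (insert b S) B" using xq by blast
        then have "x \<notin> insert b S" by (rule reach_notin)
        then have "x = a" using lp \<open>x = last p\<close> by auto
        then show False using xr RB' ab(1) RARB by blast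
      qed
    next
      case False
      then have xr: "x \<in> reach E' (insert a S) A" using xp by blast
      then have xn: "x \<notin> insert a S" by (rule reach_notin)
      show False
      proof (cases "x = last q")
        case True
        then have "x = b" using lq xn by auto
        then show False using xr RA' ab(2) RARB by blast
      next
        case False
        then have "x \<in> reach E' (insert b S) B" using xq by blast
        then show False using xr RA' RB' RARB by blast
      qed
    qed
  qed
  define h where "h p = p @ rev (qf p)" for p
  have hdisj: "set (h p1) \<inter> set (h p2) = {}" if "p1 \<in> P'" "p2 \<in> P'" "p1 \<noteq> p2" for p1 p2
  proof -
    have "last p1 \<noteq> last p2" using injP that unfolding inj_on_def by blast
    then have gne: "g (last p1) \<noteq> g (last p2)" using ginj P'(4) that by blast
    then have "qf p1 \<noteq> qf p2" using qf[OF that(1)] qf[OF that(2)] by auto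
    then have "set (qf p1) \<inter> set (qf p2) = {}" using Q'(3) qf that unfolding disj_fam_def by blast
    moreover have "set p1 \<inter> set p2 = {}" using P'(3) that unfolding disj_fam_def by blast
    moreover have "set p1 \<inter> set (qf p2) = {}" using key[OF that(1)] qf[OF that(2)] gne by auto
    moreover have "set p2 \<inter> set (qf p1) = {}" using key[OF that(2)] qf[OF that(1)] gne by auto
    ultimately show ?thesis unfolding h_def by auto
  qed
  have hne: "h p \<noteq> []" if "p \<in> P'" for p using Pne that unfolding h_def by simp
  have hinj: "inj_on h P'"
  proof (rule inj_onI, rule ccontr)
    fix p q assume pq: "p \<in> P'" "q \<in> P'" "h p = h q" "p \<noteq> q"
    have "hd (h p) \<in> set (h p)" using hne[OF pq(1)] by simp
    then show False using hdisj[OF pq(1,2,4)] pq(3) by auto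
  qed
  show ?thesis
  proof (intro exI conjI)
    show "finite (h ` P')" using P' by simp
    show "card (h ` P') = k" using card_image[OF hinj] P'(2) by simp
    show "disj_fam (h ` P')" unfolding disj_fam_def
    proof (intro ballI impI)
      fix x y assume "x \<in> h ` P'" "y \<in> h ` P'" "x \<noteq> y"
      then obtain p q where "p \<in> P'" "q \<in> P'" "x = h p" "y = h q" "p \<noteq> q" by blast
      then show "set x \<inter> set y = {}" using hdisj by blast
    qed
    show "\<forall>p\<in>h ` P'. lwalk E p \<and> hd p \<in> A \<and> last p \<in> B"
    proof
      fix r assume "r \<in> h ` P'"
      then obtain p where p: "p \<in> P'" "r = h p" by blast
      have wp: "lwalk E p" using P'(4) p(1) lwalk_mono[of E' p E] E'E by blast
      have "lwalk E (qf p)" using Q'(4) qf[OF p(1)] lwalk_mono[of E' "qf p" E] E'E by blast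
      then have wq: "lwalk E (rev (qf p))" using lwalk_rev sym by blast
      have "last p = hd (rev (qf p)) \<or> E (last p) (hd (rev (qf p)))"
        using qf[OF p(1)] Qne Eab unfolding g_def by (auto simp: hd_rev)
      then have "lwalk E r" using p(2) lwalk_append[OF wp wq] unfolding h_def by simp
      moreover have "hd r \<in> A" using p P'(4) Pne unfolding h_def by auto
      moreover have "last r \<in> B" using p Q'(4) qf[OF p(1)] Qne unfolding h_def by (auto simp: last_rev)
      ultimately show "lwalk E r \<and> hd r \<in> A \<and> last r \<in> B" by blast
    qed
  qed
qed

lemma menger:
  assumes "finite V" "\<forall>u w. E u w \<longrightarrow> u \<in> V \<and> w \<in> V" "\<forall>u w. E u w \<longrightarrow> E w u" "\<forall>u. \<not> E u u"
    "A \<subseteq> V" "B \<subseteq> V" "\<forall>T. T \<subseteq> V \<longrightarrow> reach E T A \<inter> B = {} \<longrightarrow> k \<le> card T"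
  shows "\<exists>P. finite P \<and> card P = k \<and> disj_fam P \<and> (\<forall>p\<in>P. lwalk E p \<and> hd p \<in> A \<and> last p \<in> B)"
  using assms
proof (induction "card {(u,w). E u w}" arbitrary: E A B rule: less_induct)
  case less
  note fin = less.prems(1) and inV = less.prems(2) and sym = less.prems(3) and irr = less.prems(4)
    and AV = less.prems(5) and BV = less.prems(6) and hyp = less.prems(7)
  have symE: "\<And>u w. E u w \<Longrightarrow> E w u" using sym by blast
  have finE: "finite {(u,w). E u w}"
    by (rule finite_subset[of _ "V \<times> V"]) (use inV fin in auto)
  show ?case
  proof (cases "{(u,w). E u w} = {}")
    case True
    then have noE: "\<And>u w. \<not> E u w" by auto
    have "reach E (A \<inter> B) A \<subseteq> A - (A \<inter> B)" by (rule reach_closed) (auto simp: noE)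
    then have "reach E (A \<inter> B) A \<inter> B = {}" by blast
    then have "k \<le> card (A \<inter> B)" using hyp AV by blast
    then obtain C where C: "C \<subseteq> A \<inter> B" "card C = k" by (rule obtain_subset_with_card_n)
    have finC: "finite C" using C(1) AV fin by (meson finite_subset inf.coboundedI1)
    have inj: "inj_on (\<lambda>x. [x]) C" by (rule inj_onI) simp
    show ?thesis
    proof (intro exI conjI)
      show "finite ((\<lambda>x. [x]) ` C)" using finC by simp
      show "card ((\<lambda>x. [x]) ` C) = k" using card_image[OF inj] C(2) by simp
      show "disj_fam ((\<lambda>x. [x]) ` C)" unfolding disj_fam_def by auto
      show "\<forall>p\<in>(\<lambda>x. [x]) ` C. lwalk E p \<and> hd p \<in> A \<and> last p \<in> B" using C(1) by auto
    qed
  next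
    case False
    then obtain x y where Exy: "E x y" by auto
    define E' where "E' = (\<lambda>u w. E u w \<and> \<not> ((u = x \<and> w = y) \<or> (u = y \<and> w = x)))"
    have E'E: "\<And>u w. E' u w \<Longrightarrow> E u w" unfolding E'_def by blast
    have lessE: "card {(u,w). E' u w} < card {(u,w). E u w}"
    proof (rule psubset_card_mono[OF finE])
      have "(x,y) \<notin> {(u,w). E' u w}" unfolding E'_def by auto
      moreover have "(x,y) \<in> {(u,w). E u w}" using Exy by auto
      moreover have "{(u,w). E' u w} \<subseteq> {(u,w). E u w}" using E'E by auto
      ultimately show "{(u,w). E' u w} \<subset> {(u,w). E u w}" by blast
    qed
    have inV': "\<forall>u w. E' u w \<longrightarrow> u \<in> V \<and> w \<in> V" using inV E'E by blast
    have sym': "\<forall>u w. E' u w \<longrightarrow> E' w u" using sym unfolding E'_def by blast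
    have symE': "\<And>u w. E' u w \<Longrightarrow> E' w u" using sym' by blast
    have irr': "\<forall>u. \<not> E' u u" using irr E'E by blast
    show ?thesis
    proof (cases "\<forall>T. T \<subseteq> V \<longrightarrow> reach E' T A \<inter> B = {} \<longrightarrow> k \<le> card T")
      case True
      obtain P where P: "finite P" "card P = k" "disj_fam P" "\<forall>p\<in>P. lwalk E' p \<and> hd p \<in> A \<and> last p \<in> B"
        using less.hyps[OF lessE fin inV' sym' irr' AV BV True] by blast
      have "\<forall>p\<in>P. lwalk E p \<and> hd p \<in> A \<and> last p \<in> B"
        using P(4) lwalk_mono[of E' _ E] E'E by blast
      then show ?thesis using P by blast
    next
      case False
      then obtain S where S: "S \<subseteq> V" "reach E' S A \<inter> B = {}" "card S < k" by (auto simp: not_le)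
      have finS: "finite S" using S(1) fin finite_subset by blast
      have nsep: "reach E S A \<inter> B \<noteq> {}"
      proof
        assume "reach E S A \<inter> B = {}"
        then have "k \<le> card S" using hyp S(1) by blast
        then show False using S(3) by simp
      qed
      have nsepB: "reach E S B \<inter> A \<noteq> {}" using nsep reach_sym[of E S A B] symE by blast
      have SB: "reach E' S B \<inter> A = {}" using S(2) reach_sym[of E' S A B] symE' by blast
      have RARB: "reach E' S A \<inter> reach E' S B = {}"
      proof (rule ccontr)
        assume "reach E' S A \<inter> reach E' S B \<noteq> {}"
        then obtain z where "z \<in> reach E' S A" "z \<in> reach E' S B" by blast
        then have "reach E' S A \<inter> B \<noteq> {}" using reach_inter[of E' z S A B] symE' by blast
        then show False using S(2) by blast
      qed
      have escape: "\<exists>a b. a \<in> reach E' S A0 \<and> E a b \<and> b \<notin> S \<and> b \<notin> reach E' S A0"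
        if ne: "reach E S A0 \<inter> B0 \<noteq> {}" and dis: "reach E' S A0 \<inter> B0 = {}" for A0 B0
      proof (rule ccontr)
        assume "\<not> ?thesis"
        then have cl: "\<And>a b. a \<in> reach E' S A0 \<Longrightarrow> E a b \<Longrightarrow> b \<notin> S \<Longrightarrow> b \<in> reach E' S A0" by blast
        have "reach E S A0 \<subseteq> reach E' S A0"
        proof (rule reach_closed)
          show "A0 - S \<subseteq> reach E' S A0" by (auto intro: reach_base)
        next
          fix z w assume "z \<in> reach E' S A0" "E z w" "w \<notin> S"
          then show "w \<in> reach E' S A0" by (rule cl)
        qed
        then show False using ne dis by blast
      qed
      obtain a b where ab: "a \<in> reach E' S A" "E a b" "b \<notin> S" "b \<notin> reach E' S A"
        using escape[OF nsep S(2)] by blast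
      obtain a' b' where ab': "a' \<in> reach E' S B" "E a' b'" "b' \<notin> S" "b' \<notin> reach E' S B"
        using escape[OF nsepB SB] by blast
      have "\<not> E' a b" using ab reach_step[of a E' S A b] by blast
      then have abxy: "(a = x \<and> b = y) \<or> (a = y \<and> b = x)" using ab(2) unfolding E'_def by blast
      have "\<not> E' a' b'" using ab' reach_step[of a' E' S B b'] by blast
      then have abxy': "(a' = x \<and> b' = y) \<or> (a' = y \<and> b' = x)" using ab'(2) unfolding E'_def by blast
      have "a \<noteq> a'" using ab(1) ab'(1) RARB by blast
      moreover have "x \<noteq> y" using Exy irr by blast
      ultimately have ba': "b = a'" "a = b'" using abxy abxy' by auto
      have bRB: "b \<in> reach E' S B" using ab'(1) ba' by simp
      have aRB: "a \<notin> reach E' S B" using ab(1) RARB by blast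
      have anb: "a \<noteq> b" using ab(1) ab(4) by blast
      have E'char: "\<And>u v. E' u v \<longleftrightarrow> E u v \<and> \<not> ((u = a \<and> v = b) \<or> (u = b \<and> v = a))"
        using abxy unfolding E'_def by auto
      have E'char2: "\<And>u v. E' u v \<longleftrightarrow> E u v \<and> \<not> ((u = b \<and> v = a) \<or> (u = a \<and> v = b))"
        using E'char by blast
      have hypA: "\<forall>T. T \<subseteq> V \<longrightarrow> reach E' T A \<inter> insert a S = {} \<longrightarrow> k \<le> card T"
        using side[of V E A B k E' a b S, OF hyp E'char S(2) ab(1) ab(4)] .
      have hypE2: "\<forall>T. T \<subseteq> V \<longrightarrow> reach E T B \<inter> A = {} \<longrightarrow> k \<le> card T"
        using hyp reach_sym[of E _ A B] symE by blast
      have hypB: "\<forall>T. T \<subseteq> V \<longrightarrow> reach E' T B \<inter> insert b S = {} \<longrightarrow> k \<le> card T"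
        using side[of V E B A k E' b a S, OF hypE2 E'char2 SB bRB aRB] .
      have aV: "a \<in> V" and bV: "b \<in> V" using inV ab(2) by auto
      have aS: "a \<notin> S" using reach_notin[OF ab(1)] .
      have cardA: "card (insert a S) = k"
      proof -
        have "reach E' (insert a S) A \<inter> insert a S = {}" by (blast dest: reach_notin)
        then have "k \<le> card (insert a S)" using hypA aV S(1) by blast
        moreover have "card (insert a S) = Suc (card S)" using finS aS by simp
        ultimately show ?thesis using S(3) by simp
      qed
      have cardB: "card (insert b S) = k"
      proof -
        have "reach E' (insert b S) B \<inter> insert b S = {}" by (blast dest: reach_notin)
        then have "k \<le> card (insert b S)" using hypB bV S(1) by blast
        moreover have "card (insert b S) = Suc (card S)" using finS ab(3) by simp
        ultimately show ?thesis using S(3) by simp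
      qed
      have aSV: "insert a S \<subseteq> V" using aV S(1) by blast
      have bSV: "insert b S \<subseteq> V" using bV S(1) by blast
      obtain P1 where P1: "finite P1" "card P1 = k" "disj_fam P1"
          "\<forall>p\<in>P1. lwalk E' p \<and> hd p \<in> A \<and> last p \<in> insert a S"
        using less.hyps[OF lessE fin inV' sym' irr' AV aSV hypA] by blast
      obtain Q1 where Q1: "finite Q1" "card Q1 = k" "disj_fam Q1"
          "\<forall>p\<in>Q1. lwalk E' p \<and> hd p \<in> B \<and> last p \<in> insert b S"
        using less.hyps[OF lessE fin inV' sym' irr' BV bSV hypB] by blast
      obtain P' where P': "finite P'" "card P' = k" "disj_fam P'"
          "\<forall>p\<in>P'. lwalk E' p \<and> hd p \<in> A \<and> last p \<in> insert a S \<and> set (butlast p) \<subseteq> reach E' (insert a S) A"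
        using normalize[OF P1(1) P1(2) P1(4) P1(3)] by blast
      obtain Q' where Q': "finite Q'" "card Q' = k" "disj_fam Q'"
          "\<forall>p\<in>Q'. lwalk E' p \<and> hd p \<in> B \<and> last p \<in> insert b S \<and> set (butlast p) \<subseteq> reach E' (insert b S) B"
        using normalize[OF Q1(1) Q1(2) Q1(4) Q1(3)] by blast
      show ?thesis
        using combine[of E' E a b P' k A S Q' B, OF E'E ab(2) symE P' Q' RARB ab(1) bRB anb cardB finS] .
    qed
  qed
qed

lemma successively_drop: "successively P xs \<Longrightarrow> successively P (drop n xs)"
  by (metis append_take_drop_id successively_append_iff)

lemma successively_take: "successively P xs \<Longrightarrow> successively P (take n xs)"
  by (metis append_take_drop_id successively_append_iff)

lemma walk_to_path:
  assumes "lwalk E p"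
  shows "\<exists>q. q \<noteq> [] \<and> distinct q \<and> successively E q \<and> hd q = hd p \<and> last q = last p \<and> set q \<subseteq> set p"
  using assms
proof (induction p)
  case Nil then show ?case by (simp add: lwalk_def)
next
  case (Cons a p)
  show ?case
  proof (cases "p = []")
    case True then show ?thesis by (intro exI[of _ "[a]"]) simp
  next
    case False
    have wp: "lwalk E p" using Cons.prems False by (simp add: lwalk_def successively_Cons)
    have step: "a = hd p \<or> E a (hd p)" using Cons.prems False by (simp add: lwalk_def successively_Cons)
    obtain q where q: "q \<noteq> []" "distinct q" "successively E q" "hd q = hd p" "last q = last p" "set q \<subseteq> set p"
      using Cons.IH[OF wp] by blast
    show ?thesis
    proof (cases "a \<in> set q")
      case True
      then obtain i where i: "i < length q" "q ! i = a" by (meson in_set_conv_nth)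
      let ?r = "drop i q"
      have "?r \<noteq> []" using i by simp
      moreover have "distinct ?r" using q(2) by simp
      moreover have "successively E ?r" using q(3) by (rule successively_drop)
      moreover have "hd ?r = a" using i by (simp add: hd_drop_conv_nth)
      moreover have "last ?r = last (a # p)" using i q(5) False by simp
      moreover have "set ?r \<subseteq> set (a # p)" using q(6) set_drop_subset[of i q] by auto
      ultimately show ?thesis by (intro exI[of _ ?r]) simp
    next
      case nq: False
      have "a \<noteq> hd q" using q(1) nq hd_in_set by metis
      then have "E a (hd q)" using step q(4) by auto
      then have "successively E (a # q)" using q(3) by (simp add: successively_Cons)
      moreover have "last (a # q) = last (a # p)" using q(1,5) False by simp
      ultimately show ?thesis using q nq by (intro exI[of _ "a # q"]) auto
    qed
  qed
qed

lemma lwalk_inside: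
  assumes "lwalk E p" "hd p \<in> W" "\<And>u w. E u w \<Longrightarrow> w \<in> W"
  shows "set p \<subseteq> W"
proof -
  have "set p \<subseteq> reach E {} {hd p}" using assms(1) by (intro reach_walk_set) auto
  also have "reach E {} {hd p} \<subseteq> W" by (rule reach_closed) (use assms in auto)
  finally show ?thesis .
qed

lemma fan:
  assumes sg: "sgraph V E" and kc: "k_connected V E k" and v: "v \<in> V" and XV: "X \<subseteq> V" and vX: "v \<notin> X"
    and m: "m \<le> k" "m \<le> card X"
  shows "\<exists>P. finite P \<and> card P = m \<and>
     (\<forall>p\<in>P. distinct p \<and> successively E p \<and> set p \<subseteq> V \<and> hd p = v \<and> last p \<in> X \<and> 2 \<le> length p
        \<and> set (butlast p) \<inter> X = {}) \<and>
     (\<forall>p\<in>P. \<forall>q\<in>P. p \<noteq> q \<longrightarrow> set p \<inter> set q = {v})"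
proof -
  define V' where "V' = V - {v}"
  define E' where "E' = (\<lambda>u w. E u w \<and> u \<noteq> v \<and> w \<noteq> v)"
  define A where "A = {w. E v w}"
  have finV: "finite V" and Ein: "\<And>u w. E u w \<Longrightarrow> u \<in> V \<and> w \<in> V \<and> u \<noteq> w \<and> E w u"
    using sg unfolding sgraph_def by blast+
  have AV': "A \<subseteq> V'" unfolding A_def V'_def using Ein by fastforce
  have XV': "X \<subseteq> V'" unfolding V'_def using XV vX by blast
  have "\<exists>P. finite P \<and> card P = m \<and> disj_fam P \<and> (\<forall>p\<in>P. lwalk E' p \<and> hd p \<in> A \<and> last p \<in> X)"
  proof (rule menger)
    show "finite V'" unfolding V'_def using finV by simp
    show "\<forall>u w. E' u w \<longrightarrow> u \<in> V' \<and> w \<in> V'" unfolding E'_def V'_def using Ein by blast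
    show "\<forall>u w. E' u w \<longrightarrow> E' w u" unfolding E'_def using Ein by blast
    show "\<forall>u. \<not> E' u u" unfolding E'_def using Ein by blast
    show "A \<subseteq> V'" by (rule AV')
    show "X \<subseteq> V'" by (rule XV')
    show "\<forall>T. T \<subseteq> V' \<longrightarrow> reach E' T A \<inter> X = {} \<longrightarrow> m \<le> card T"
    proof (intro allI impI)
      fix T assume T: "T \<subseteq> V'" "reach E' T A \<inter> X = {}"
      show "m \<le> card T"
      proof (rule ccontr)
        assume "\<not> m \<le> card T"
        then have ck: "card T < k" "card T < card X" using m by auto
        have TV: "T \<subseteq> V" using T V'_def by auto
        have vT: "v \<notin> T" using T V'_def by auto
        have conn: "connected_on E (V - T)" using kc TV ck unfolding k_connected_def by blast
        have finT: "finite T" using TV finV finite_subset by blast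
        have "\<not> X \<subseteq> T"
        proof
          assume "X \<subseteq> T"
          then have "card X \<le> card T" using finT card_mono by blast
          then show False using ck by simp
        qed
        then obtain x where x: "x \<in> X" "x \<notin> T" by blast
        have vVT: "v \<in> V - T" using v vT by blast
        have xVT: "x \<in> V - T" using x XV by blast
        obtain xs where xs: "xs \<noteq> []" "hd xs = v" "last xs = x" "set xs \<subseteq> V - T"
            "\<forall>i. i + 1 < length xs \<longrightarrow> E (xs ! i) (xs ! (i + 1))"
          using conn vVT xVT unfolding connected_on_def by blast
        have all: "xs ! i = v \<or> xs ! i \<in> reach E' T A" if "i < length xs" for i
          using that
        proof (induction i)
          case 0 then show ?case using xs(1,2) by (simp add: hd_conv_nth)
        next
          case (Suc i)
          have IH: "xs ! i = v \<or> xs ! i \<in> reach E' T A" using Suc by simp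
          have Ei: "E (xs ! i) (xs ! Suc i)" using xs(5) Suc.prems by auto
          have nT: "xs ! Suc i \<notin> T" using xs(4) Suc.prems nth_mem by blast
          show ?case
          proof (cases "xs ! Suc i = v")
            case True then show ?thesis by simp
          next
            case False
            show ?thesis
            proof (cases "xs ! i = v")
              case True
              then have "xs ! Suc i \<in> A" using Ei unfolding A_def by simp
              then show ?thesis using nT reach_base by metis
            next
              case nv: False
              then have "E' (xs ! i) (xs ! Suc i)" using Ei False unfolding E'_def by simp
              then show ?thesis using IH nv nT reach_step by metis
            qed
          qed
        qed
        have "last xs = xs ! (length xs - 1)" using xs(1) by (simp add: last_conv_nth)
        then have "x = v \<or> x \<in> reach E' T A" using all[of "length xs - 1"] xs(1,3) by simp
        then show False using x vX T(2) by blast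
      qed
    qed
  qed
  then obtain P0 where P0: "finite P0" "card P0 = m" "disj_fam P0"
      "\<forall>p\<in>P0. lwalk E' p \<and> hd p \<in> A \<and> last p \<in> X" by blast
  have "\<forall>p\<in>P0. \<exists>q. q \<noteq> [] \<and> distinct q \<and> successively E' q \<and> hd q = hd p \<and> last q = last p \<and> set q \<subseteq> set p"
    using P0(4) walk_to_path by blast
  then have "\<exists>f. \<forall>p\<in>P0. f p \<noteq> [] \<and> distinct (f p) \<and> successively E' (f p) \<and> hd (f p) = hd p
      \<and> last (f p) = last p \<and> set (f p) \<subseteq> set p" by (rule bchoice)
  then obtain f where f: "\<forall>p\<in>P0. f p \<noteq> [] \<and> distinct (f p) \<and> successively E' (f p) \<and> hd (f p) = hd p
      \<and> last (f p) = last p \<and> set (f p) \<subseteq> set p" by (elim exE)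
  define t where "t p = trunc X (f p)" for p
  have tprops: "t p \<noteq> [] \<and> hd (t p) \<in> A \<and> last (t p) \<in> X \<and> set (butlast (t p)) \<inter> X = {} \<and>
      set (t p) \<subseteq> set p \<and> distinct (t p) \<and> successively E' (t p) \<and> set (t p) \<subseteq> V'" if p: "p \<in> P0" for p
  proof -
    have fp: "f p \<noteq> []" "last (f p) \<in> X" "hd (f p) = hd p" "set (f p) \<subseteq> set p" "distinct (f p)"
        "successively E' (f p)"
      using f P0(4) p by auto
    obtain j where j: "t p = take (Suc j) (f p)" using trunc_basic(6)[OF fp(1,2)] unfolding t_def by blast
    have spV: "set p \<subseteq> V'"
    proof (rule lwalk_inside)
      show "lwalk E' p" using P0(4) p by blast
      show "hd p \<in> V'" using P0(4) p AV' by blast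
      show "\<And>u w. E' u w \<Longrightarrow> w \<in> V'" unfolding E'_def V'_def using Ein by blast
    qed
    have "t p \<noteq> []" using trunc_basic(1)[OF fp(1,2)] unfolding t_def .
    moreover have "hd (t p) \<in> A" using trunc_basic(2)[OF fp(1,2)] fp(3) P0(4) p unfolding t_def by simp
    moreover have "last (t p) \<in> X" using trunc_basic(3)[OF fp(1,2)] unfolding t_def .
    moreover have "set (butlast (t p)) \<inter> X = {}" using trunc_basic(4)[OF fp(1,2)] unfolding t_def .
    moreover have "set (t p) \<subseteq> set p" using trunc_basic(5)[OF fp(1,2)] fp(4) unfolding t_def by blast
    moreover have "distinct (t p)" using j fp(5) by simp
    moreover have "successively E' (t p)" using j fp(6) successively_take by metis
    ultimately show ?thesis using spV by blast
  qed
  define fp where "fp p = v # t p" for p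
  have tdisj: "set (t p) \<inter> set (t q) = {}" if "p \<in> P0" "q \<in> P0" "p \<noteq> q" for p q
    using tprops[OF that(1)] tprops[OF that(2)] P0(3) that unfolding disj_fam_def by blast
  have inj: "inj_on fp P0"
  proof (rule inj_onI, rule ccontr)
    fix p q assume pq: "p \<in> P0" "q \<in> P0" "fp p = fp q" "p \<noteq> q"
    then have "t p = t q" unfolding fp_def by simp
    moreover have "hd (t p) \<in> set (t p)" using tprops[OF pq(1)] by simp
    ultimately show False using tdisj[OF pq(1,2,4)] by auto
  qed
  show ?thesis
  proof (intro exI conjI)
    show "finite (fp ` P0)" using P0(1) by simp
    show "card (fp ` P0) = m" using card_image[OF inj] P0(2) by simp
    show "\<forall>p\<in>fp ` P0. distinct p \<and> successively E p \<and> set p \<subseteq> V \<and> hd p = v \<and> last p \<in> X \<and> 2 \<le> length p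
        \<and> set (butlast p) \<inter> X = {}"
    proof
      fix r assume "r \<in> fp ` P0"
      then obtain p where p: "p \<in> P0" "r = v # t p" unfolding fp_def by blast
      note tp = tprops[OF p(1)]
      have "v \<notin> set (t p)" using tp V'_def by blast
      then have "distinct r" using tp p(2) by simp
      moreover have "successively E r"
      proof -
        have "E v (hd (t p))" using tp unfolding A_def by simp
        moreover have "successively E (t p)" using tp successively_mono[of "E'" "t p" E] unfolding E'_def by blast
        ultimately show ?thesis using p(2) tp by (simp add: successively_Cons)
      qed
      moreover have "set r \<subseteq> V" using tp p(2) v V'_def by auto
      moreover have "hd r = v" using p(2) by simp
      moreover have "last r \<in> X" using p(2) tp by simp
      moreover have "2 \<le> length r" using p(2) tp by (cases "t p") auto
      moreover have "set (butlast r) \<inter> X = {}" using p(2) tp vX by auto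
      ultimately show "distinct r \<and> successively E r \<and> set r \<subseteq> V \<and> hd r = v \<and> last r \<in> X \<and> 2 \<le> length r
        \<and> set (butlast r) \<inter> X = {}" by blast
    qed
    show "\<forall>p\<in>fp ` P0. \<forall>q\<in>fp ` P0. p \<noteq> q \<longrightarrow> set p \<inter> set q = {v}"
    proof (intro ballI impI)
      fix r s assume "r \<in> fp ` P0" "s \<in> fp ` P0" "r \<noteq> s"
      then obtain p q where "p \<in> P0" "q \<in> P0" "r = v # t p" "s = v # t q" "p \<noteq> q"
        unfolding fp_def by blast
      then show "set r \<inter> set s = {v}" using tdisj by auto
    qed
  qed
qed

lemma mod_back: "(i::nat) < c \<Longrightarrow> d \<le> c \<Longrightarrow> ((i + d) mod c + (c - d)) mod c = i"
  by (metis add.assoc add_diff_cancel_left' le_Suc_ex mod_add_left_eq mod_add_self2 mod_less)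

lemma mod_inj: "(i::nat) < c \<Longrightarrow> j < c \<Longrightarrow> d \<le> c \<Longrightarrow> (i + d) mod c = (j + d) mod c \<Longrightarrow> i = j"
  by (metis mod_back)

lemma cycle_char:
  "is_cycle V E cs \<longleftrightarrow> 3 \<le> length cs \<and> distinct cs \<and> set cs \<subseteq> V \<and> successively E cs \<and> E (last cs) (hd cs)"
proof
  assume c: "is_cycle V E cs"
  then have len: "3 \<le> length cs" and ed: "\<forall>i < length cs. E (cs ! i) (cs ! ((i + 1) mod length cs))"
    unfolding is_cycle_def by auto
  have "successively E cs" unfolding successively_conv_nth
  proof (intro allI impI)
    fix i assume "Suc i < length cs"
    then show "E (cs ! i) (cs ! Suc i)" using ed[rule_format, of i] by simp
  qed
  moreover have "E (last cs) (hd cs)"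
  proof -
    have "E (cs ! (length cs - 1)) (cs ! ((length cs - 1 + 1) mod length cs))" using ed len by simp
    moreover have "length cs - 1 + 1 = length cs" using len by simp
    then have "(length cs - 1 + 1) mod length cs = 0" by simp
    moreover have "cs \<noteq> []" using len by auto
    ultimately show ?thesis using len by (simp add: last_conv_nth hd_conv_nth)
  qed
  ultimately show "3 \<le> length cs \<and> distinct cs \<and> set cs \<subseteq> V \<and> successively E cs \<and> E (last cs) (hd cs)"
    using c unfolding is_cycle_def by blast
next
  assume a: "3 \<le> length cs \<and> distinct cs \<and> set cs \<subseteq> V \<and> successively E cs \<and> E (last cs) (hd cs)"
  have ne: "cs \<noteq> []" using a by auto
  have "E (cs ! i) (cs ! ((i + 1) mod length cs))" if i: "i < length cs" for i
  proof (cases "Suc i < length cs")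
    case True then show ?thesis using a successively_nth[of E cs i] by simp
  next
    case False
    then have i1: "i = length cs - 1" using i by simp
    have "Suc i = length cs" using False i by simp
    then have "(i+1) mod length cs = 0" by simp
    then show ?thesis using a ne i1 by (simp add: last_conv_nth hd_conv_nth)
  qed
  then show "is_cycle V E cs" using a unfolding is_cycle_def by blast
qed

lemma cycle_rotate: assumes "is_cycle V E cs" shows "is_cycle V E (rotate j cs)"
proof -
  have len: "3 \<le> length cs" "distinct cs" "set cs \<subseteq> V"
    and ed: "\<forall>i < length cs. E (cs ! i) (cs ! ((i + 1) mod length cs))"
    using assms unfolding is_cycle_def by auto
  define c where "c = length cs"
  have cne: "cs \<noteq> []" using len by auto
  have cpos: "0 < c" unfolding c_def using len(1) by linarith
  have "E (rotate j cs ! i) (rotate j cs ! ((i + 1) mod c))" if i: "i < c" for i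
  proof -
    have lt: "(i+1) mod c < length cs" using cpos c_def by simp
    have r2: "rotate j cs ! ((i + 1) mod c) = cs ! ((j + (i + 1) mod c) mod c)"
      using nth_rotate[OF lt, of j] c_def by simp
    have r1: "rotate j cs ! i = cs ! ((j + i) mod c)" using i c_def by (simp add: nth_rotate)
    have "(j + i) mod c < length cs" using cpos c_def by simp
    then have "E (cs ! ((j + i) mod c)) (cs ! (((j + i) mod c + 1) mod c))" using ed c_def by blast
    moreover have "((j + i) mod c + 1) mod c = (j + (i + 1) mod c) mod c" by presburger
    ultimately show ?thesis using r1 r2 by simp
  qed
  then show ?thesis using len cne unfolding is_cycle_def c_def by simp
qed

lemma close_cycle:
  assumes s: "successively E (last L # M @ [hd L])" and dL: "distinct L" and dM: "distinct M"
    and disj: "set M \<inter> set L = {}" and ne: "L \<noteq> []" and sL: "successively E L"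
  shows "distinct (L @ M) \<and> successively E (L @ M) \<and> E (last (L @ M)) (hd (L @ M))"
proof -
  have d: "distinct (L @ M)" using dL dM disj by auto
  show ?thesis
  proof (cases "M = []")
    case True
    then have "E (last L) (hd L)" using s by simp
    then show ?thesis using True d sL by simp
  next
    case False
    have s2: "successively E (last L # M) \<and> E (last M) (hd L)"
      using s False successively_append_iff[of E "last L # M" "[hd L]"] by simp
    then have "successively E M" "E (last L) (hd M)" using False by (auto simp: successively_Cons)
    then have "successively E (L @ M)" using sL ne False by (simp add: successively_append_iff)
    moreover have "E (last (L @ M)) (hd (L @ M))" using s2 False ne by simp
    ultimately show ?thesis using d by blast
  qed
qed

lemma insertion:
  assumes cyc: "is_cycle V E cs" and sym: "\<And>u w. E u w \<Longrightarrow> E w u"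
    and px: "distinct px" "successively E px" "set px \<subseteq> V" "hd px = v" "2 \<le> length px"
      "set (butlast px) \<inter> set cs = {}"
    and py: "distinct py" "successively E py" "set py \<subseteq> V" "hd py = v" "2 \<le> length py"
      "set (butlast py) \<inter> set cs = {}"
    and pxy: "set px \<inter> set py = {v}"
    and i: "i < length cs" and d: "1 \<le> d" "d \<le> 2"
    and lx: "last px = cs ! i" and ly: "last py = cs ! ((i + d) mod length cs)"
  shows "\<exists>D. is_cycle V E D \<and> v \<in> set D \<and> length cs + 2 \<le> length D + d"
proof -
  define c where "c = length cs"
  have cc: "3 \<le> c" "distinct cs" "set cs \<subseteq> V" using cyc unfolding is_cycle_def c_def by auto
  have csne: "cs \<noteq> []" using cc c_def by auto
  define cs' where "cs' = rotate ((i + d) mod c) cs"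
  have cyc': "is_cycle V E cs'" unfolding cs'_def by (rule cycle_rotate[OF cyc])
  have lcs': "length cs' = c" and scs': "set cs' = set cs" unfolding cs'_def c_def by auto
  have dcs': "distinct cs'" and succ': "successively E cs'" using cyc' cycle_char by blast+
  define L where "L = take (c - d + 1) cs'"
  have lenL: "length L = c - d + 1" unfolding L_def using lcs' d cc by simp
  have Lne: "L \<noteq> []" using lenL by auto
  have hdL: "hd L = last py"
  proof -
    have "cs' \<noteq> []" using lcs' cc by auto
    then have "hd L = cs' ! 0" unfolding L_def by (simp add: hd_conv_nth)
    also have "\<dots> = cs ! ((i + d) mod c)" unfolding cs'_def using nth_rotate[of 0 cs "(i + d) mod c"] csne c_def by simp
    finally show ?thesis using ly c_def by simp
  qed
  have lastL: "last L = last px"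
  proof -
    have "c - d < length cs'" using lcs' d cc by simp
    then have "last L = cs' ! (c - d)" unfolding L_def using d
      by (simp add: take_Suc_conv_app_nth)
    also have "\<dots> = cs ! (((i + d) mod c + (c - d)) mod c)" unfolding cs'_def
      using nth_rotate[of "c - d" cs "(i + d) mod c"] csne cc c_def d by simp
    also have "((i + d) mod c + (c - d)) mod c = i" using mod_back[of i c d] i d cc c_def by simp
    finally show ?thesis using lx by simp
  qed
  have dL: "distinct L" unfolding L_def using dcs' by simp
  have sL: "successively E L" unfolding L_def using succ' by (rule successively_take)
  have setL: "set L \<subseteq> set cs" unfolding L_def using scs' set_take_subset by metis
  obtain rx where rx: "px = v # rx" "rx \<noteq> []"
  proof (cases px)
    case Nil then show thesis using px(5) by simp
  next
    case (Cons a r) then show thesis using that px(4,5) by (cases r) auto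
  qed
  obtain ry where ry: "py = v # ry" "ry \<noteq> []"
  proof (cases py)
    case Nil then show thesis using py(5) by simp
  next
    case (Cons a r) then show thesis using that py(4,5) by (cases r) auto
  qed
  define M where "M = rev (butlast px) @ butlast ry"
  have pxne: "px \<noteq> []" using rx by simp
  have "rev px = rev (butlast px @ [last px])" using append_butlast_last_id[OF pxne] by simp
  then have revpx: "rev px = last px # rev (butlast px)" by simp
  have tlpy: "ry = butlast ry @ [last py]" using ry by simp
  have "last L # M @ [hd L] = (last px # rev (butlast px)) @ (butlast ry @ [last py])"
    unfolding M_def using hdL lastL by simp
  also have "\<dots> = rev px @ ry" by (simp only: revpx[symmetric] tlpy[symmetric])
  finally have seq: "last L # M @ [hd L] = rev px @ ry" .
  have s: "successively E (last L # M @ [hd L])"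
  proof -
    have "successively E (rev px)" using px(2) sym by (auto intro: successively_mono)
    moreover have "successively E ry" "E v (hd ry)" using py(2) ry by (auto simp: successively_Cons)
    moreover have "last (rev px) = v" using px(4) rx by simp
    ultimately have "successively E (rev px @ ry)" using ry(2) by (simp add: successively_append_iff)
    then show ?thesis using seq by simp
  qed
  have vry: "v \<notin> set ry" using py(1) ry by simp
  have dM: "distinct M"
  proof -
    have "distinct (rev (butlast px))" using px(1) by (simp add: distinct_butlast)
    moreover have "distinct (butlast ry)" using py(1) ry by (simp add: distinct_butlast)
    moreover have "set (butlast px) \<inter> set (butlast ry) = {}"
    proof -
      have "set (butlast px) \<subseteq> set px" by (rule in_set_butlastD[THEN subsetI]) 
      moreover have "set (butlast ry) \<subseteq> set py - {v}" using vry ry(1) in_set_butlastD by fastforce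
      ultimately show ?thesis using pxy by blast
    qed
    ultimately show ?thesis unfolding M_def by simp
  qed
  have disj: "set M \<inter> set L = {}"
  proof -
    have "set (butlast ry) \<subseteq> set (butlast py)" using ry by (auto simp: butlast.simps)
    then show ?thesis unfolding M_def using px(6) py(6) setL by auto
  qed
  define D where "D = L @ M"
  have cl: "distinct D \<and> successively E D \<and> E (last D) (hd D)"
    unfolding D_def using close_cycle[OF s dL dM disj Lne sL] .
  have lenM: "length M = length px - 1 + (length py - 2)" unfolding M_def using ry by simp
  have lenD: "length D = c - d + 1 + (length px - 1) + (length py - 2)" unfolding D_def using lenL lenM by simp
  have setD: "set D \<subseteq> V"
  proof -
    have "set M \<subseteq> set px \<union> set py" unfolding M_def using ry in_set_butlastD by fastforce
    then show ?thesis unfolding D_def using setL cc px(3) py(3) by auto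
  qed
  have "v \<in> set (butlast px)" using rx by simp
  then have vD: "v \<in> set D" unfolding D_def M_def by simp
  have "3 \<le> length D" using lenD cc d px(5) py(5) by simp
  then have "is_cycle V E D" using cl setD cycle_char by blast
  moreover have "length cs + 2 \<le> length D + d" using lenD cc d px(5) py(5) c_def by simp
  ultimately show ?thesis using vD by blast
qed

lemma idx_walk_lwalk: "xs \<noteq> [] \<Longrightarrow> \<forall>i. i + 1 < length xs \<longrightarrow> E (xs ! i) (xs ! (i + 1)) \<Longrightarrow> lwalk E xs"
  unfolding lwalk_def successively_conv_nth by auto

lemma sg_fin: "sgraph V E \<Longrightarrow> finite V"
  unfolding sgraph_def by blast

lemma sg_edge: "sgraph V E \<Longrightarrow> E u w \<Longrightarrow> u \<in> V \<and> w \<in> V \<and> u \<noteq> w \<and> E w u"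
  unfolding sgraph_def by blast

lemma mod_ne_self: assumes "(i::nat) < c" "3 \<le> c" "1 \<le> d" "d \<le> 2" shows "(i + d) mod c \<noteq> i"
proof (cases "i + d < c")
  case True then show ?thesis using assms by simp
next
  case False
  then have "(i + d) mod c = (i + d - c) mod c" using le_mod_geq[of c "i + d"] by simp
  also have "\<dots> = i + d - c" using assms by simp
  finally show ?thesis using assms False by simp
qed

lemma cycle_exists:
  assumes sg: "sgraph V E" and kc: "k_connected V E k" and k2: "2 \<le> k"
  shows "\<exists>cs. is_cycle V E cs"
proof -
  have finV: "finite V" using sg by (rule sg_fin)
  have cV: "k < card V" using kc unfolding k_connected_def by blast
  then have "V \<noteq> {}" by auto
  then obtain v where v: "v \<in> V" by blast
  have cX: "2 \<le> card (V - {v})" using cV k2 finV v by (simp add: card_Diff_singleton)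
  obtain P where P: "finite P" "card P = 2"
      "\<forall>p\<in>P. distinct p \<and> successively E p \<and> set p \<subseteq> V \<and> hd p = v \<and> last p \<in> V - {v} \<and> 2 \<le> length p
         \<and> set (butlast p) \<inter> (V - {v}) = {}"
      "\<forall>p\<in>P. \<forall>q\<in>P. p \<noteq> q \<longrightarrow> set p \<inter> set q = {v}"
    using fan[OF sg kc v _ _ k2 cX] by blast
  from P(2) obtain p q where pq: "P = {p, q}" "p \<noteq> q" by (meson card_2_iff)
  have nb: "E v (r ! 1) \<and> r ! 1 \<in> set r \<and> r ! 1 \<noteq> v" if "r \<in> P" for r
  proof -
    have r: "distinct r" "successively E r" "hd r = v" "2 \<le> length r" using P(3) that by auto
    have rne: "r \<noteq> []" using r(4) by auto
    have "E (r ! 0) (r ! Suc 0)" using successively_nth[OF r(2)] r(4) by simp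
    moreover have r0: "r ! 0 = v" using r(3) rne by (simp add: hd_conv_nth)
    moreover have "r ! 1 \<in> set r" using r(4) by simp
    moreover have "r ! 1 \<noteq> r ! 0" using r(1,4) rne nth_eq_iff_index_eq[of r 1 0] by simp
    ultimately show ?thesis by simp
  qed
  define a where "a = p ! 1"
  define b where "b = q ! 1"
  have pP: "p \<in> P" and qP: "q \<in> P" using pq by auto
  have Ea: "E v a" and Eb: "E v b" using nb pP qP unfolding a_def b_def by blast+
  have ab: "a \<noteq> b"
  proof
    assume "a = b"
    moreover have "a \<in> set p" "b \<in> set q" using nb[OF pP] nb[OF qP] unfolding a_def b_def by auto
    ultimately have "a \<in> set p \<inter> set q" by simp
    then have "a = v" using P(4) pP qP pq(2) by blast
    then show False using nb pP unfolding a_def by blast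
  qed
  have aV: "a \<in> V - {v}" and bV: "b \<in> V - {v}" using sg_edge[OF sg Ea] sg_edge[OF sg Eb] by auto
  have "connected_on E (V - {v})" using kc v k2 unfolding k_connected_def by simp
  then obtain xs where xs: "xs \<noteq> []" "hd xs = a" "last xs = b" "set xs \<subseteq> V - {v}"
      "\<forall>i. i + 1 < length xs \<longrightarrow> E (xs ! i) (xs ! (i + 1))"
    using aV bV unfolding connected_on_def by blast
  have "lwalk E xs" using idx_walk_lwalk xs(1,5) by blast
  then obtain r where r: "r \<noteq> []" "distinct r" "successively E r" "hd r = a" "last r = b" "set r \<subseteq> set xs"
    using walk_to_path[OF \<open>lwalk E xs\<close>] xs(2,3) by auto
  have rV: "set r \<subseteq> V - {v}" using r(6) xs(4) by blast
  have lr: "2 \<le> length r"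
  proof (rule ccontr)
    assume "\<not> 2 \<le> length r"
    then have "length (tl r) = 0" by simp
    then have "tl r = []" by blast
    then have "r = [hd r]" using r(1) by (metis list.collapse)
    then have "hd r = last r" by (metis last.simps)
    then show False using r(4,5) ab by simp
  qed
  define D where "D = v # r"
  have "3 \<le> length D" using lr unfolding D_def by simp
  moreover have "distinct D" using rV r(2) unfolding D_def by auto
  moreover have "set D \<subseteq> V" using rV v unfolding D_def by auto
  moreover have "successively E D" using r(1,3,4) Ea unfolding D_def by (simp add: successively_Cons)
  moreover have "E (last D) (hd D)" using r(1,5) sg_edge[OF sg Eb] unfolding D_def by simp
  ultimately show ?thesis using cycle_char by blast
qed

lemma longest_exists:
  assumes finV: "finite V" and cs0: "is_cycle V E cs0"
  shows "\<exists>C. is_cummerbund V E C"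
proof -
  define Ls where "Ls = length ` {cs. is_cycle V E cs}"
  have "Ls \<subseteq> {..card V}"
  proof
    fix l assume "l \<in> Ls"
    then obtain cs where cs: "is_cycle V E cs" "l = length cs" unfolding Ls_def by blast
    then have "distinct cs" "set cs \<subseteq> V" unfolding is_cycle_def by auto
    then have "length cs \<le> card V" using finV card_mono distinct_card by metis
    then show "l \<in> {..card V}" using cs by simp
  qed
  then have finL: "finite Ls" using finite_subset by blast
  have neL: "Ls \<noteq> {}" using cs0 unfolding Ls_def by blast
  have "Max Ls \<in> Ls" using finL neL by simp
  then obtain C where C: "is_cycle V E C" "length C = Max Ls" unfolding Ls_def by auto
  have "\<forall>ds. is_cycle V E ds \<longrightarrow> length ds \<le> length C"
    using C(2) finL unfolding Ls_def by auto
  then show ?thesis using C(1) unfolding is_cummerbund_def by blast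
qed

lemma lower_bound:
  assumes sg: "sgraph V E" and kc: "k_connected V E k" and k2: "2 \<le> k"
  shows "min (card V) (3 * k) \<le> cc V E"
proof -
  have finV: "finite V" using sg by (rule sg_fin)
  have symE: "\<And>u w. E u w \<Longrightarrow> E w u" using sg_edge[OF sg] by blast
  obtain cs0 where "is_cycle V E cs0" using cycle_exists[OF sg kc k2] by blast
  then obtain C where C: "is_cummerbund V E C" using longest_exists[OF finV] by blast
  define U where "U = \<Union>{set cs | cs. is_cummerbund V E cs}"
  have ccU: "cc V E = card U" unfolding cc_def U_def ..
  have UV: "U \<subseteq> V" unfolding U_def is_cummerbund_def is_cycle_def by blast
  have finU: "finite U" using UV finV finite_subset by blast
  define c where "c = length C"
  have Ccyc: "is_cycle V E C" using C unfolding is_cummerbund_def by blast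
  have Cmax: "\<And>ds. is_cycle V E ds \<Longrightarrow> length ds \<le> c" using C unfolding is_cummerbund_def c_def by blast
  have c3: "3 \<le> c" and dC: "distinct C" and CV: "set C \<subseteq> V" using Ccyc unfolding is_cycle_def c_def by auto
  have CU: "set C \<subseteq> U" unfolding U_def using C by blast
  have cardC: "card (set C) = c" using dC distinct_card c_def by blast
  show ?thesis
  proof (cases "3 * k \<le> c")
    case True
    have "c \<le> card U" using card_mono[OF finU CU] cardC by simp
    then show ?thesis using True ccU by simp
  next
    case False
    have "V \<subseteq> U"
    proof
      fix v assume v: "v \<in> V"
      show "v \<in> U"
      proof (cases "v \<in> set C")
        case True then show ?thesis using CU by blast
      next
        case vC: False
        define m where "m = min k c"
        have mk: "m \<le> k" and mc: "m \<le> card (set C)" unfolding m_def using cardC by auto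
        obtain P where P: "finite P" "card P = m"
          "\<forall>p\<in>P. distinct p \<and> successively E p \<and> set p \<subseteq> V \<and> hd p = v \<and> last p \<in> set C \<and> 2 \<le> length p
             \<and> set (butlast p) \<inter> set C = {}"
          "\<forall>p\<in>P. \<forall>q\<in>P. p \<noteq> q \<longrightarrow> set p \<inter> set q = {v}"
          using fan[OF sg kc v CV vC mk mc] by blast
        have Pne: "p \<noteq> []" if "p \<in> P" for p
        proof -
          have "2 \<le> length p" using P(3) that by blast
          then show ?thesis by auto
        qed
        have injl: "inj_on last P"
        proof (rule inj_onI, rule ccontr)
          fix p q assume pq: "p \<in> P" "q \<in> P" "last p = last q" "p \<noteq> q"
          have "last p \<in> set p" using Pne[OF pq(1)] by simp
          moreover have "last q \<in> set q" using Pne[OF pq(2)] by simp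
          moreover have "set p \<inter> set q = {v}" using P(4) pq(1,2,4) by blast
          ultimately have "last p = v" using pq(3) by auto
          moreover have "last p \<in> set C" using P(3) pq(1) by blast
          ultimately show False using vC by simp
        qed
        define LP where "LP = last ` P"
        have cLP: "card LP = m" unfolding LP_def using card_image[OF injl] P(2) by simp
        have LPC: "LP \<subseteq> set C"
        proof
          fix x assume "x \<in> LP"
          then obtain p where "p \<in> P" "x = last p" unfolding LP_def by blast
          then show "x \<in> set C" using P(3) by blast
        qed
        define I where "I = {i. i < c \<and> C ! i \<in> LP}"
        have Ilt: "I \<subseteq> {..<c}" unfolding I_def by blast
        have injC: "inj_on (nth C) I"
        proof (rule inj_onI)
          fix i j assume "i \<in> I" "j \<in> I" "C ! i = C ! j"
          then show "i = j" using dC nth_eq_iff_index_eq[of C i j] unfolding I_def c_def by blast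
        qed
        have imI: "nth C ` I = LP"
        proof
          show "nth C ` I \<subseteq> LP" unfolding I_def by blast
          show "LP \<subseteq> nth C ` I"
          proof
            fix x assume x: "x \<in> LP"
            then have "x \<in> set C" using LPC by blast
            then obtain i where "i < c" "C ! i = x" unfolding c_def by (meson in_set_conv_nth)
            then show "x \<in> nth C ` I" unfolding I_def using x by blast
          qed
        qed
        have cI: "card I = m" using card_image[OF injC] imI cLP by simp
        have finI: "finite I" using Ilt finite_subset by blast
        have pick: "\<exists>p\<in>P. last p = C ! i" if "i \<in> I" for i
        proof -
          have "C ! i \<in> last ` P" using that unfolding I_def LP_def by blast
          then obtain p where "p \<in> P" "C ! i = last p" by (rule imageE)
          then show ?thesis by metis
        qed
        have ins: "\<exists>D. is_cycle V E D \<and> v \<in> set D \<and> c + 2 \<le> length D + d"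
          if i: "i \<in> I" and j: "(i + d) mod c \<in> I" and d: "1 \<le> d" "d \<le> 2" for i d
        proof -
          obtain px where px: "px \<in> P" "last px = C ! i" using pick[OF i] by blast
          obtain py where py: "py \<in> P" "last py = C ! ((i + d) mod c)" using pick[OF j] by blast
          have ic: "i < c" using i unfolding I_def by blast
          have jc: "(i + d) mod c < c" using c3 by simp
          have "(i + d) mod c \<noteq> i" using mod_ne_self[OF ic c3 d] .
          then have neq: "i \<noteq> (i + d) mod c" by simp
          have "C ! i \<noteq> C ! ((i + d) mod c)" using dC nth_eq_iff_index_eq[of C i "(i + d) mod c"] ic jc neq
            unfolding c_def by simp
          then have "px \<noteq> py" using px py by auto
          then have pxy: "set px \<inter> set py = {v}" using P(4) px(1) py(1) by blast
          have pxp: "distinct px" "successively E px" "set px \<subseteq> V" "hd px = v" "2 \<le> length px"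
              "set (butlast px) \<inter> set C = {}" using P(3) px(1) by blast+
          have pyp: "distinct py" "successively E py" "set py \<subseteq> V" "hd py = v" "2 \<le> length py"
              "set (butlast py) \<inter> set C = {}" using P(3) py(1) by blast+
          show ?thesis using insertion[OF Ccyc symE pxp pyp pxy, of i d] ic d px(2) py(2) unfolding c_def
            by blast
        qed
        have adj: "(i + 1) mod c \<notin> I" if i: "i \<in> I" for i
        proof
          assume "(i + 1) mod c \<in> I"
          then obtain D where D: "is_cycle V E D" "c + 2 \<le> length D + 1" using ins[OF i, of 1] by auto
          then show False using Cmax[OF D(1)] by simp
        qed
        show "v \<in> U"
        proof (rule ccontr)
          assume vU: "v \<notin> U"
          have two: "(i + 2) mod c \<notin> I" if i: "i \<in> I" for i
          proof
            assume "(i + 2) mod c \<in> I"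
            then obtain D where D: "is_cycle V E D" "v \<in> set D" "c + 2 \<le> length D + 2"
              using ins[OF i, of 2] by auto
            have "length D = c" using Cmax[OF D(1)] D(3) by simp
            then have "is_cummerbund V E D" using D(1) Cmax unfolding is_cummerbund_def by simp
            then have "set D \<subseteq> U" unfolding U_def by blast
            then show False using D(2) vU by blast
          qed
          define J1 where "J1 = (\<lambda>i. (i + 1) mod c) ` I"
          define J2 where "J2 = (\<lambda>i. (i + 2) mod c) ` I"
          have inj1: "inj_on (\<lambda>i. (i + 1) mod c) I"
          proof (rule inj_onI)
            fix i j assume "i \<in> I" "j \<in> I" "(i + 1) mod c = (j + 1) mod c"
            then show "i = j" using mod_inj[of i c j 1] Ilt c3 by auto
          qed
          have inj2: "inj_on (\<lambda>i. (i + 2) mod c) I"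
          proof (rule inj_onI)
            fix i j assume "i \<in> I" "j \<in> I" "(i + 2) mod c = (j + 2) mod c"
            then show "i = j" using mod_inj[of i c j 2] Ilt c3 by auto
          qed
          have cJ1: "card J1 = m" unfolding J1_def using card_image[OF inj1] cI by simp
          have cJ2: "card J2 = m" unfolding J2_def using card_image[OF inj2] cI by simp
          have d1: "I \<inter> J1 = {}" unfolding J1_def using adj by blast
          have d2: "I \<inter> J2 = {}" unfolding J2_def using two by blast
          have d3: "J1 \<inter> J2 = {}"
          proof (rule ccontr)
            assume "J1 \<inter> J2 \<noteq> {}"
            then obtain i j where ij: "i \<in> I" "j \<in> I" "(i + 1) mod c = (j + 2) mod c"
              unfolding J1_def J2_def by blast
            have "((j + 1) mod c + 1) mod c = (j + 2) mod c" by presburger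
            then have "((j + 1) mod c + 1) mod c = (i + 1) mod c" using ij(3) by simp
            moreover have "(j + 1) mod c < c" "i < c" using c3 ij(1) Ilt by auto
            ultimately have "(j + 1) mod c = i" using mod_inj[of "(j + 1) mod c" c i 1] c3 by simp
            then show False using adj[OF ij(2)] ij(1) by simp
          qed
          have sub: "I \<union> J1 \<union> J2 \<subseteq> {..<c}" unfolding J1_def J2_def using Ilt c3 by auto
          have finJ: "finite J1" "finite J2" unfolding J1_def J2_def using finI by auto
          have "card (I \<union> J1 \<union> J2) = card I + card J1 + card J2"
          proof -
            have "card (I \<union> J1) = card I + card J1" using card_Un_disjoint[OF finI finJ(1) d1] .
            moreover have "(I \<union> J1) \<inter> J2 = {}" using d2 d3 by blast
            ultimately show ?thesis using card_Un_disjoint[of "I \<union> J1" J2] finI finJ by simp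
          qed
          moreover have "card (I \<union> J1 \<union> J2) \<le> c" using card_mono[OF _ sub] by simp
          ultimately have "3 * m \<le> c" using cI cJ1 cJ2 by simp
          then show False using False c3 unfolding m_def by (simp add: min_def split: if_splits)
        qed
      qed
    qed
    then have "card V \<le> card U" using card_mono[OF finU] by blast
    then show ?thesis using ccU by simp
  qed
qed

definition Ea :: "nat \<Rightarrow> nat \<Rightarrow> nat \<Rightarrow> bool" where
  "Ea n u v \<longleftrightarrow> u \<noteq> v \<and> u < n \<and> v < n"

definition Eb :: "nat \<Rightarrow> nat \<Rightarrow> nat \<Rightarrow> nat \<Rightarrow> bool" where
  "Eb k n u v \<longleftrightarrow> u \<noteq> v \<and> u < n \<and> v < n \<and>
     (u < k \<or> v < k \<or> (u < 3 * k \<and> v < 3 * k \<and> (u - k) div 2 = (v - k) div 2))"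

lemma sg_Ea: "sgraph {0..<n} (Ea n)"
  unfolding sgraph_def Ea_def by auto

lemma sg_Eb: "sgraph {0..<n} (Eb k n)"
  unfolding sgraph_def Eb_def by auto

lemma idx_small2: "\<forall>i. i + 1 < length [a, b] \<longrightarrow> E ([a, b] ! i) ([a, b] ! (i + 1))" if "E a b"
  using that by auto

lemma idx_small3: "\<forall>i. i + 1 < length [a, b, c] \<longrightarrow> E ([a, b, c] ! i) ([a, b, c] ! (i + 1))"
  if "E a b" "E b c"
proof (intro allI impI)
  fix i assume "i + 1 < length [a, b, c]"
  then have "i = 0 \<or> i = 1" by auto
  then show "E ([a, b, c] ! i) ([a, b, c] ! (i + 1))" using that by auto
qed

lemma hub_connected:
  assumes s: "s \<in> W" and hub: "\<And>u. u \<in> W \<Longrightarrow> u \<noteq> s \<Longrightarrow> E s u \<and> E u s"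
  shows "connected_on E W"
  unfolding connected_on_def
proof (intro conjI ballI)
  show "W \<noteq> {}" using s by blast
next
  fix u w assume u: "u \<in> W" and w: "w \<in> W"
  show "\<exists>xs. xs \<noteq> [] \<and> hd xs = u \<and> last xs = w \<and> set xs \<subseteq> W \<and>
        (\<forall>i. i + 1 < length xs \<longrightarrow> E (xs ! i) (xs ! (i + 1)))"
  proof (cases "u = w")
    case True then show ?thesis using u by (intro exI[of _ "[u]"]) auto
  next
    case uw: False
    show ?thesis
    proof (cases "u = s")
      case True
      then show ?thesis using s w uw hub[OF w] idx_small2[of E s w] by (intro exI[of _ "[s, w]"]) auto
    next
      case us: False
      show ?thesis
      proof (cases "w = s")
        case True
        then show ?thesis using s u us hub[OF u] idx_small2[of E u s] by (intro exI[of _ "[u, s]"]) auto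
      next
        case False
        have "E u s" "E s w" using hub[OF u us] hub[OF w False] by auto
        then show ?thesis using s u w idx_small3[of E u s w] by (intro exI[of _ "[u, s, w]"]) auto
      qed
    qed
  qed
qed

lemma hub_kconn:
  assumes kn: "k < n" and hub: "\<And>s u. s < k \<Longrightarrow> u < n \<Longrightarrow> u \<noteq> s \<Longrightarrow> E s u \<and> E u s"
  shows "k_connected {0..<n} E k"
  unfolding k_connected_def
proof (intro conjI allI impI)
  show "k < card {0..<n}" using kn by simp
next
  fix S assume S: "S \<subseteq> {0..<n} \<and> card S < k"
  have finS: "finite S" using S finite_subset by blast
  have "\<not> {0..<k} \<subseteq> S"
  proof
    assume "{0..<k} \<subseteq> S"
    then have "card {0..<k} \<le> card S" using finS card_mono by blast
    then show False using S by simp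
  qed
  then obtain s where s0: "s \<in> {0..<k}" "s \<notin> S" by blast
  then have s: "s < k" "s \<notin> S" by auto
  show "connected_on E ({0..<n} - S)"
  proof (rule hub_connected)
    show "s \<in> {0..<n} - S" using s kn by auto
    show "\<And>u. u \<in> {0..<n} - S \<Longrightarrow> u \<noteq> s \<Longrightarrow> E s u \<and> E u s" using hub s(1) by auto
  qed
qed

lemma kconn_Ea: "k < n \<Longrightarrow> k_connected {0..<n} (Ea n) k"
  by (rule hub_kconn) (auto simp: Ea_def)

lemma kconn_Eb: "k < n \<Longrightarrow> k_connected {0..<n} (Eb k n) k"
  by (rule hub_kconn) (auto simp: Eb_def)

lemma cc_le_card:
  assumes "finite W" "\<And>cs. is_cummerbund V E cs \<Longrightarrow> set cs \<subseteq> W"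
  shows "cc V E \<le> card W"
proof -
  have "\<Union>{set cs | cs. is_cummerbund V E cs} \<subseteq> W" using assms(2) by blast
  then show ?thesis unfolding cc_def using card_mono[OF assms(1)] by blast
qed

lemma cc_le_V: "finite V \<Longrightarrow> cc V E \<le> card V"
  by (rule cc_le_card) (auto simp: is_cummerbund_def is_cycle_def)

lemma three_pairs:
  fixes x y z :: nat
  assumes d: "x div 2 = y div 2" "y div 2 = z div 2" and ne: "x \<noteq> y" "y \<noteq> z" "x \<noteq> z"
  shows False
proof -
  have x: "x = 2 * (x div 2) + x mod 2" "y = 2 * (y div 2) + y mod 2" "z = 2 * (z div 2) + z mod 2"
    by simp_all
  have "x mod 2 \<noteq> y mod 2"
  proof
    assume "x mod 2 = y mod 2" then have "x = y" using x(1,2) d(1) by metis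
    then show False using ne by simp
  qed
  moreover have "y mod 2 \<noteq> z mod 2"
  proof
    assume "y mod 2 = z mod 2" then have "y = z" using x(2,3) d(2) by metis
    then show False using ne by simp
  qed
  moreover have "x mod 2 \<noteq> z mod 2"
  proof
    assume "x mod 2 = z mod 2" then have "x = z" using x(1,3) d by metis
    then show False using ne by simp
  qed
  moreover have "x mod 2 < 2" "y mod 2 < 2" "z mod 2 < 2" by simp_all
  ultimately show False by arith
qed

lemma Eb_cycle_bound:
  assumes cyc: "is_cycle {0..<n} (Eb k n) D"
  shows "length D \<le> 3 * k \<and> (\<forall>w\<in>set D. 3 * k \<le> w \<longrightarrow> length D + 1 \<le> 3 * k)"
proof -
  define L where "L = length D"
  have L3: "3 \<le> L" and dD: "distinct D" and ed: "\<And>i. i < L \<Longrightarrow> Eb k n (D ! i) (D ! ((i + 1) mod L))"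
    using cyc unfolding is_cycle_def L_def by auto
  have Lpos: "0 < L" using L3 by linarith
  define Sp where "Sp = {i. i < L \<and> D ! i < k}"
  define Np where "Np = {i. i < L \<and> \<not> D ! i < k}"
  have finSp: "finite Sp" and finNp: "finite Np" unfolding Sp_def Np_def by auto
  have cardL: "L = card Sp + card Np"
  proof -
    have "Sp \<union> Np = {..<L}" "Sp \<inter> Np = {}" unfolding Sp_def Np_def by auto
    then show ?thesis using card_Un_disjoint[OF finSp finNp] by simp
  qed
  have cSp: "card Sp \<le> k"
  proof -
    have "inj_on (nth D) Sp"
    proof (rule inj_onI)
      fix i j assume "i \<in> Sp" "j \<in> Sp" "D ! i = D ! j"
      then show "i = j" using dD nth_eq_iff_index_eq[of D i j] unfolding Sp_def L_def by auto
    qed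
    moreover have "nth D ` Sp \<subseteq> {..<k}" unfolding Sp_def by auto
    ultimately show ?thesis using card_inj_on_le[of "nth D" Sp "{..<k}"] by simp
  qed
  have nxt1: "(i + 1) mod L < L" for i using Lpos by simp
  have nxt2': "(i + 2) mod L < L" for i using Lpos by simp
  have nxt2: "((i + 1) mod L + 1) mod L = (i + 2) mod L" for i by presburger
  define f where "f i = (if D ! ((i + 1) mod L) < k then ((i + 1) mod L, True) else ((i + 2) mod L, False))" for i
  have fin: "f i \<in> Sp \<times> UNIV" if i: "i \<in> Np" for i
  proof (cases "D ! ((i + 1) mod L) < k")
    case True then show ?thesis unfolding f_def Sp_def using nxt1 by simp
  next
    case False
    have iL: "i < L" and ik: "\<not> D ! i < k" using i unfolding Np_def by auto
    have e1: "Eb k n (D ! i) (D ! ((i + 1) mod L))" using ed iL .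
    have "D ! ((i + 2) mod L) < k"
    proof (rule ccontr)
      assume c: "\<not> D ! ((i + 2) mod L) < k"
      have e2: "Eb k n (D ! ((i + 1) mod L)) (D ! ((i + 2) mod L))"
        using ed[OF nxt1[of i]] nxt2[of i] by simp
      have ab: "(D ! i - k) div 2 = (D ! ((i + 1) mod L) - k) div 2" "D ! i \<noteq> D ! ((i + 1) mod L)"
        using e1 ik False unfolding Eb_def by auto
      have bc: "(D ! ((i + 1) mod L) - k) div 2 = (D ! ((i + 2) mod L) - k) div 2"
          "D ! ((i + 1) mod L) \<noteq> D ! ((i + 2) mod L)"
        using e2 c False unfolding Eb_def by auto
      have "(i + 2) mod L \<noteq> i" using mod_ne_self[OF iL L3, of 2] by simp
      then have ac: "D ! i \<noteq> D ! ((i + 2) mod L)"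
        using dD iL nxt2'[of i] nth_eq_iff_index_eq[of D i "(i + 2) mod L"] unfolding L_def by auto
      have "D ! i - k \<noteq> D ! ((i + 1) mod L) - k" "D ! ((i + 1) mod L) - k \<noteq> D ! ((i + 2) mod L) - k"
          "D ! i - k \<noteq> D ! ((i + 2) mod L) - k"
        using ab(2) bc(2) ac ik False c by auto
      then show False using three_pairs ab(1) bc(1) by blast
    qed
    then show ?thesis unfolding f_def Sp_def using False nxt2' by simp
  qed
  have injf: "inj_on f Np"
  proof (rule inj_onI)
    fix i j assume i: "i \<in> Np" and j: "j \<in> Np" and fij: "f i = f j"
    have iL: "i < L" "j < L" using i j unfolding Np_def by auto
    show "i = j"
    proof (cases "D ! ((i + 1) mod L) < k")
      case True
      then have "(i + 1) mod L = (j + 1) mod L" using fij unfolding f_def by (auto split: if_splits)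
      then show ?thesis using mod_inj[of i L j 1] iL L3 by auto
    next
      case False
      then have "(i + 2) mod L = (j + 2) mod L" using fij unfolding f_def by (auto split: if_splits)
      then show ?thesis using mod_inj[of i L j 2] iL L3 by auto
    qed
  qed
  have cardSU: "card (Sp \<times> (UNIV :: bool set)) = 2 * card Sp" by (simp add: card_cartesian_product)
  have finSU: "finite (Sp \<times> (UNIV :: bool set))" using finSp by simp
  have fsub: "f ` Np \<subseteq> Sp \<times> UNIV" using fin by blast
  have cNp: "card Np \<le> 2 * card Sp"
    using card_inj_on_le[OF injf fsub finSU] cardSU by simp
  have part1: "L \<le> 3 * k" using cardL cNp cSp by linarith
  have part2: "L + 1 \<le> 3 * k" if w: "w \<in> set D" "3 * k \<le> w" for w
  proof -
    obtain p where p: "p < L" "D ! p = w" using w(1) unfolding L_def by (meson in_set_conv_nth)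
    define j where "j = (p + 1) mod L"
    have jL: "j < L" unfolding j_def using nxt1 by simp
    have ep: "Eb k n w (D ! j)" using ed[OF p(1)] p(2) unfolding j_def by simp
    have jS: "j \<in> Sp" using ep w(2) jL unfolding Eb_def Sp_def by auto
    have notin: "(j, False) \<notin> f ` Np"
    proof
      assume "(j, False) \<in> f ` Np"
      then obtain i where i: "i \<in> Np" "f i = (j, False)" by (metis imageE)
      have iL: "i < L" and ik: "\<not> D ! i < k" using i(1) unfolding Np_def by auto
      have c2: "(i + 2) mod L = j" using i(2) unfolding f_def by (auto split: if_splits)
      have "((i + 1) mod L + 1) mod L = (p + 1) mod L" using nxt2[of i] c2 unfolding j_def by simp
      then have "(i + 1) mod L = p" using mod_inj[of "(i + 1) mod L" L p 1] nxt1[of i] p(1) L3 by simp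
      then have "Eb k n (D ! i) w" using ed[OF iL] p(2) by simp
      then show False using ik w(2) unfolding Eb_def by auto
    qed
    have "f ` Np \<subseteq> (Sp \<times> UNIV) - {(j, False)}" using fsub notin by blast
    then have "card Np \<le> card ((Sp \<times> UNIV) - {(j, False)})"
      using card_inj_on_le[OF injf] finSU by blast
    also have "\<dots> = 2 * card Sp - 1"
      using card_Diff_singleton[of "(j, False)" "Sp \<times> (UNIV :: bool set)"] finSU jS cardSU by simp
    finally have c1: "card Np \<le> 2 * card Sp - 1" .
    have "0 < card Sp" using jS finSp card_gt_0_iff by blast
    then show ?thesis using c1 cardL cSp by linarith
  qed
  show ?thesis using part1 part2 unfolding L_def by blast
qed

definition Gc :: "nat \<Rightarrow> nat \<Rightarrow> nat list" where
  "Gc k m = concat (map (\<lambda>j. [j, k + 2 * j, k + 2 * j + 1]) [0..<m])"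

lemma Gc_Suc: "Gc k (Suc m) = Gc k m @ [m, k + 2 * m, k + 2 * m + 1]"
  by (simp add: Gc_def)

lemma Gc_props:
  assumes "m \<le> k" "3 * k < n"
  shows "length (Gc k m) = 3 * m \<and> distinct (Gc k m) \<and> set (Gc k m) = {0..<m} \<union> {k..<k + 2 * m}
    \<and> successively (Eb k n) (Gc k m) \<and> (0 < m \<longrightarrow> hd (Gc k m) = 0 \<and> last (Gc k m) = k + 2 * m - 1)"
  using assms
proof (induction m)
  case 0 then show ?case by (simp add: Gc_def)
next
  case (Suc m)
  have mk: "m < k" using Suc.prems by simp
  have IH: "length (Gc k m) = 3 * m" "distinct (Gc k m)" "set (Gc k m) = {0..<m} \<union> {k..<k + 2 * m}"
      "successively (Eb k n) (Gc k m)" "0 < m \<longrightarrow> hd (Gc k m) = 0 \<and> last (Gc k m) = k + 2 * m - 1"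
    using Suc by auto
  let ?T = "[m, k + 2 * m, k + 2 * m + 1]"
  have len: "length (Gc k (Suc m)) = 3 * Suc m" using IH(1) by (simp add: Gc_Suc)
  have dT: "distinct ?T" using mk by simp
  have disj: "set (Gc k m) \<inter> set ?T = {}" using IH(3) mk by auto
  have dist: "distinct (Gc k (Suc m))" using IH(2) dT disj by (simp add: Gc_Suc)
  have setG: "set (Gc k (Suc m)) = {0..<Suc m} \<union> {k..<k + 2 * Suc m}"
    using IH(3) mk by (auto simp: Gc_Suc)
  have e1: "Eb k n m (k + 2 * m)" unfolding Eb_def using mk Suc.prems by auto
  have h1: "(2 * m + 1) div 2 = m" by simp
  have e2: "Eb k n (k + 2 * m) (k + 2 * m + 1)" unfolding Eb_def using mk Suc.prems h1 by auto
  have sT: "successively (Eb k n) ?T" using e1 e2 by simp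
  have conn: "Gc k m = [] \<or> Eb k n (last (Gc k m)) m"
  proof (cases "m = 0")
    case True then show ?thesis by (simp add: Gc_def)
  next
    case False
    then have "last (Gc k m) = k + 2 * m - 1" using IH(5) by simp
    then show ?thesis unfolding Eb_def using mk Suc.prems False by auto
  qed
  have succ: "successively (Eb k n) (Gc k (Suc m))"
    using IH(4) sT conn by (simp add: Gc_Suc successively_append_iff)
  have hl: "hd (Gc k (Suc m)) = 0 \<and> last (Gc k (Suc m)) = k + 2 * Suc m - 1"
  proof (cases "m = 0")
    case True then show ?thesis by (simp add: Gc_def)
  next
    case False
    then have "hd (Gc k m) = 0" "Gc k m \<noteq> []" using IH(5) IH(1) by auto
    then show ?thesis by (simp add: Gc_Suc)
  qed
  show ?case using len dist setG succ hl by blast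
qed

lemma H_cycle:
  assumes "1 \<le> k" "3 * k < n"
  shows "is_cycle {0..<n} (Eb k n) (Gc k k)"
proof -
  have G: "length (Gc k k) = 3 * k" "distinct (Gc k k)" "set (Gc k k) = {0..<k} \<union> {k..<k + 2 * k}"
      "successively (Eb k n) (Gc k k)" "hd (Gc k k) = 0" "last (Gc k k) = k + 2 * k - 1"
    using Gc_props[of k k n] assms by auto
  have "set (Gc k k) \<subseteq> {0..<n}" using G(3) assms by auto
  moreover have "Eb k n (last (Gc k k)) (hd (Gc k k))" using G(5,6) assms unfolding Eb_def by auto
  moreover have "3 \<le> length (Gc k k)" using G(1) assms by simp
  ultimately show ?thesis using G cycle_char by blast
qed

theorem theorem7:
  fixes k n :: nat
  assumes "k \<ge> 2" and "n \<ge> k + 1"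
  shows "(\<forall>(V :: 'a set) E. sgraph V E \<and> card V = n \<and> k_connected V E k
            \<longrightarrow> cc V E \<ge> min n (3 * k))
       \<and> (\<exists>(V :: nat set) E. sgraph V E \<and> card V = n \<and> k_connected V E k
            \<and> cc V E = min n (3 * k))"
proof
  show "\<forall>(V :: 'a set) E. sgraph V E \<and> card V = n \<and> k_connected V E k \<longrightarrow> cc V E \<ge> min n (3 * k)"
  proof (intro allI impI)
    fix V :: "'a set" and E assume h: "sgraph V E \<and> card V = n \<and> k_connected V E k"
    then have "min (card V) (3 * k) \<le> cc V E" using lower_bound assms(1) by blast
    then show "cc V E \<ge> min n (3 * k)" using h by simp
  qed
next
  have kn: "k < n" using assms by simp
  have k1: "1 \<le> k" using assms by simp
  show "\<exists>(V :: nat set) E. sgraph V E \<and> card V = n \<and> k_connected V E k \<and> cc V E = min n (3 * k)"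
  proof (cases "n \<le> 3 * k")
    case True
    have lb: "min (card {0..<n}) (3 * k) \<le> cc {0..<n} (Ea n)"
      using lower_bound[OF sg_Ea kconn_Ea[OF kn] assms(1)] .
    have ub: "cc {0..<n} (Ea n) \<le> card {0..<n}" using cc_le_V[of "{0..<n}" "Ea n"] by simp
    have "cc {0..<n} (Ea n) = min n (3 * k)" using lb ub True by simp
    then show ?thesis using sg_Ea kconn_Ea[OF kn] by (intro exI[of _ "{0..<n}"] exI[of _ "Ea n"]) simp
  next
    case False
    have lb: "min (card {0..<n}) (3 * k) \<le> cc {0..<n} (Eb k n)"
      using lower_bound[OF sg_Eb kconn_Eb[OF kn] assms(1)] .
    have H: "is_cycle {0..<n} (Eb k n) (Gc k k)" using H_cycle k1 False by simp
    have lenH: "length (Gc k k) = 3 * k" using Gc_props[of k k n] False by simp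
    have ub: "cc {0..<n} (Eb k n) \<le> card {0..<3 * k}"
    proof (rule cc_le_card)
      show "finite {0..<3 * k}" by simp
    next
      fix cs assume cs: "is_cummerbund {0..<n} (Eb k n) cs"
      then have cyc: "is_cycle {0..<n} (Eb k n) cs" unfolding is_cummerbund_def by blast
      have lc: "3 * k \<le> length cs" using cs H lenH unfolding is_cummerbund_def by metis
      show "set cs \<subseteq> {0..<3 * k}"
      proof
        fix w assume w: "w \<in> set cs"
        show "w \<in> {0..<3 * k}"
        proof (rule ccontr)
          assume "w \<notin> {0..<3 * k}"
          then have "3 * k \<le> w" by simp
          then have "length cs + 1 \<le> 3 * k" using Eb_cycle_bound[OF cyc] w by blast
          then show False using lc by simp
        qed
      qed
    qed
    have "cc {0..<n} (Eb k n) = min n (3 * k)" using lb ub False by simp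
    then show ?thesis using sg_Eb kconn_Eb[OF kn] by (intro exI[of _ "{0..<n}"] exI[of _ "Eb k n"]) simp
  qed
qed


end
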